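(* Let $\mathcal{A}$ be a complex unital $*$-algebra with a fixed generating set $\{a_i : i\in I\}$ closed under the involution, and let $\delta(\mathcal{A})$ be as defined in the context. Let $\mathcal{B}\subseteq\mathcal{C}$ be $*$-invariant linear subspaces of $\mathcal{A}$, both connected to $1$, and let $m\ge 1$ be an integer with $\mathcal{B}^{[m]}\subseteq\mathcal{C}$ and $2m\ge\delta(\mathcal{A})$. Let $L$ be a hermitian linear functional on $\mathcal{C}^2$ which is a flat extension with respect to $\mathcal{B}$, i.e. $\mathcal{C}=\mathcal{B}+K_L(\mathcal{C})$. Then: (1) There exists a unique hermitian linear functional $\mathcal{L}$ on $\mathcal{A}$ extending $L$ such that $\mathcal{A}=\mathcal{C}+K_{\mathcal{L}}(\mathcal{A})$ (equivalently, such that $\mathcal{A}=\mathcal{B}+K_{\mathcal{L}}(\mathcal{A})$). (2) Let $\mathcal{B}'\subseteq\mathcal{B}$ be any linear subspace with $1\in\mathcal{B}'$ and $\mathcal{C}=\mathcal{B}'\oplus K_L(\mathcal{C})$ (direct sum of vector spaces); such a choice is possible unless $L\equiv 0$. Then $\mathcal{A}=\mathcal{B}'\oplus K_{\mathcal{L}}(\mathcal{A})$, the form $\langle\cdot,\cdot\rangle_{\mathcal{L}}$ is non-degenerate on $\mathcal{B}'$, and the projection of $\mathcal{C}$ onto $\mathcal{B}'$ along $K_L(\mathcal{C})$ extends to the projection $\pi_{\mathcal{L}}:\mathcal{A}\to\mathcal{B}'$ along $K_{\mathcal{L}}(\mathcal{A})$. The formula $\rho_{\mathcal{L}}(a)b=\pi_{\mathcal{L}}(ab)$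 ($a\in\mathcal{A}$, $b\in\mathcal{B}'$) defines a $*$-representation $\rho_{\mathcal{L}}$ of $\mathcal{A}$ on $(\mathcal{B}',\langle\cdot,\cdot\rangle_{\mathcal{L}})$ with $\mathcal{L}(a)=\langle\rho_{\mathcal{L}}(a)1,1\rangle_{\mathcal{L}}$ for all $a\in\mathcal{A}$. (3) If moreover $L$ is positive on $\mathcal{C}^2$, then $\mathcal{L}$ is a positive linear functional on $\mathcal{A}$ and $\langle\cdot,\cdot\rangle_{\mathcal{L}}$ is a scalar product (positive definite) on $\mathcal{B}'$.
   Context: $\mathcal{A}$ is a complex unital $*$-algebra with unit $1$. For a $*$-invariant linear subspace $\mathcal{C}\ni 1$ of $\mathcal{A}$, $\mathcal{C}^2:=\mathrm{Lin}\{ab: a,b\in\mathcal{C}\}$. A linear functional $L$ on a $*$-invariant subspace is hermitian if $L(b^* )=\overline{L(b)}$. For hermitian $L$ on $\mathcal{C}^2$, put $\langle a,b\rangle_L:=L(b^*a)$ for $a,b\in\mathcal{C}$ and $K_L(\mathcal{C}):=\{a\in\mathcal{C}:\langle a,b\rangle_L=0\ \forall b\in\mathcal{C}\}$. $L$ is positive if $L(a^*a)\ge 0$ for all $a\in\mathcal{C}$. For $\mathcal{B}\subseteq\mathcal{C}$ both $*$-invariant with $1\in\mathcal{B}$, a hermitian $L$ on $\mathcal{C}^2$ is a flat extension with respect to $\mathcal{B}$ if $\mathcal{C}=\mathcal{B}+K_L(\mathcal{C})$. A $*$-representation of $\mathcal{A}$ on a vector space $V$ with hermitian sesquilinear form $\langle\cdot,\cdot\rangle$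 is an algebra homomorphism $\rho$ from $\mathcal{A}$ into linear operators on $V$ with $\rho(1)=I$ and $\langle\rho(a)v,w\rangle=\langle v,\rho(a^* )w\rangle$. Fix generators $\{a_i:i\in I\}$ of $\mathcal{A}$ such that for each $i$ there is $j$ with $a_i^*=a_j$. For a subspace $V\subseteq\mathcal{A}$, its prolongation is $V^+:=V+\mathrm{Lin}\{a_iv: i\in I, v\in V\}$; $V^{[0]}=V$, $V^{[l+1]}=(V^{[l]})^+$. $V$ is connected to $1$ if $1\in V$ and there are subspaces $\mathbb{C}\cdot 1=V_0\subseteq V_1\subseteq\cdots\subseteq V$ with $\bigcup_l V_l=V$ and $V_{l+1}\subseteq V_l^+$. Let $\mathcal{F}=\mathbb{C}\langle x_i:i\in I\rangle$ be the free unital $*$-algebra with $x_i^*=x_j$ whenever $a_i^*=a_j$, and $\sigma:\mathcal{F}\to\mathcal{A}$ the $*$-homomorphism with $\sigma(x_i)=a_i$; $\mathcal{I}=\ker\sigma$. The index of $p\in\mathcal{F}$ is the smallest $l$ such that $p$ is a linear combination of words of length $\le l$ in the $x_i$. For a set $S$ generating $\mathcal{I}$ as a two-sided ideal, $\delta(S)\in\mathbb{N}\cup\{\infty\}$ is the maximal index of elements of $S$, and $\delta(\mathcal{A})$ is the minimum of $\delta(S)$ over all such $S$. *)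

theory Defs
  imports Complex_Main "HOL-Library.Extended_Nat" "HOL-Library.Complex_Order"
begin

text \<open>A complex unital *-algebra is modelled as a type of class ring_1 together with a
complex scalar multiplication sm (making it a complex vector space, compatible with the
ring multiplication) and an involution st (conjugate linear, anti-multiplicative).\<close>

definition star_algebra :: "(complex \<Rightarrow> 'a::ring_1 \<Rightarrow> 'a) \<Rightarrow> ('a \<Rightarrow> 'a) \<Rightarrow> bool" where
  "star_algebra sm st \<longleftrightarrow>
     vector_space sm \<and>
     (\<forall>c a b. sm c (a * b) = sm c a * b \<and> sm c (a * b) = a * sm c b) \<and>
     (\<forall>a b. st (a + b) = st a + st b) \<and>
     (\<forall>c a. st (sm c a) = sm (cnj c) (st a)) \<and>
     (\<forall>a b. st (a * b) = st b * st a) \<and>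
     (\<forall>a. st (st a) = a)"

definition star_inv :: "('a \<Rightarrow> 'a) \<Rightarrow> 'a set \<Rightarrow> bool" where
  "star_inv st V \<longleftrightarrow> (\<forall>a\<in>V. st a \<in> V)"

definition setplus :: "'a::plus set \<Rightarrow> 'a set \<Rightarrow> 'a set" where
  "setplus U W = {u + w | u w. u \<in> U \<and> w \<in> W}"

definition direct_sum :: "'a::{plus,zero} set \<Rightarrow> 'a set \<Rightarrow> 'a set \<Rightarrow> bool" where
  "direct_sum U W V \<longleftrightarrow> setplus U W = V \<and> U \<inter> W = {0}"

definition proj :: "'a::minus set \<Rightarrow> 'a set \<Rightarrow> 'a \<Rightarrow> 'a" where
  "proj U W x = (THE u. u \<in> U \<and> x - u \<in> W)"

definition word_prod :: "('i \<Rightarrow> 'a::monoid_mult) \<Rightarrow> 'i list \<Rightarrow> 'a" where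
  "word_prod gen w = foldr (\<lambda>i x. gen i * x) w 1"

definition generates :: "(complex \<Rightarrow> 'a::ring_1 \<Rightarrow> 'a) \<Rightarrow> ('i \<Rightarrow> 'a) \<Rightarrow> 'i set \<Rightarrow> bool" where
  "generates sm gen I \<longleftrightarrow> module.span sm {word_prod gen w | w. set w \<subseteq> I} = UNIV"

definition prol :: "(complex \<Rightarrow> 'a::ring_1 \<Rightarrow> 'a) \<Rightarrow> ('i \<Rightarrow> 'a) \<Rightarrow> 'i set \<Rightarrow> 'a set \<Rightarrow> 'a set" where
  "prol sm gen I V = setplus V (module.span sm {gen i * v | i v. i \<in> I \<and> v \<in> V})"

definition connected_to_1 :: "(complex \<Rightarrow> 'a::ring_1 \<Rightarrow> 'a) \<Rightarrow> ('i \<Rightarrow> 'a) \<Rightarrow> 'i set \<Rightarrow> 'a set \<Rightarrow> bool" where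
  "connected_to_1 sm gen I V \<longleftrightarrow> 1 \<in> V \<and>
     (\<exists>Vs :: nat \<Rightarrow> 'a set. Vs 0 = module.span sm {1} \<and>
        (\<forall>l. module.subspace sm (Vs l) \<and> Vs l \<subseteq> Vs (Suc l) \<and> Vs (Suc l) \<subseteq> prol sm gen I (Vs l)) \<and>
        (\<Union>l. Vs l) = V)"

text \<open>Elements of the free algebra on the letters x_i (i in I) are represented by their
coefficient functions on words: finitely supported maps from words to complex numbers.\<close>

definition fpoly :: "'i set \<Rightarrow> ('i list \<Rightarrow> complex) set" where
  "fpoly I = {p. finite {w. p w \<noteq> 0} \<and> (\<forall>w. p w \<noteq> 0 \<longrightarrow> set w \<subseteq> I)}"

definition fsigma :: "(complex \<Rightarrow> 'a::ring_1 \<Rightarrow> 'a) \<Rightarrow> ('i \<Rightarrow> 'a) \<Rightarrow> ('i list \<Rightarrow> complex) \<Rightarrow> 'a" where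
  "fsigma sm gen p = (\<Sum>w\<in>{w. p w \<noteq> 0}. sm (p w) (word_prod gen w))"

definition fker :: "(complex \<Rightarrow> 'a::ring_1 \<Rightarrow> 'a) \<Rightarrow> ('i \<Rightarrow> 'a) \<Rightarrow> 'i set \<Rightarrow> ('i list \<Rightarrow> complex) set" where
  "fker sm gen I = {p \<in> fpoly I. fsigma sm gen p = 0}"

definition flmul :: "'i \<Rightarrow> ('i list \<Rightarrow> complex) \<Rightarrow> ('i list \<Rightarrow> complex)" where
  "flmul i p = (\<lambda>w. case w of [] \<Rightarrow> 0 | j # v \<Rightarrow> if j = i then p v else 0)"

definition frmul :: "'i \<Rightarrow> ('i list \<Rightarrow> complex) \<Rightarrow> ('i list \<Rightarrow> complex)" where
  "frmul i p = (\<lambda>w. if w \<noteq> [] \<and> last w = i then p (butlast w) else 0)"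

inductive_set fideal :: "'i set \<Rightarrow> ('i list \<Rightarrow> complex) set \<Rightarrow> ('i list \<Rightarrow> complex) set"
  for I S where
  gen: "s \<in> S \<Longrightarrow> s \<in> fideal I S"
| zero: "(\<lambda>_. 0) \<in> fideal I S"
| add: "p \<in> fideal I S \<Longrightarrow> q \<in> fideal I S \<Longrightarrow> (\<lambda>w. p w + q w) \<in> fideal I S"
| smult: "p \<in> fideal I S \<Longrightarrow> (\<lambda>w. c * p w) \<in> fideal I S"
| lmul: "i \<in> I \<Longrightarrow> p \<in> fideal I S \<Longrightarrow> flmul i p \<in> fideal I S"
| rmul: "i \<in> I \<Longrightarrow> p \<in> fideal I S \<Longrightarrow> frmul i p \<in> fideal I S"

definition findex :: "('i list \<Rightarrow> complex) \<Rightarrow> nat" where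
  "findex p = (if (\<forall>w. p w = 0) then 0 else Max {length w | w. p w \<noteq> 0})"

definition delta_set :: "('i list \<Rightarrow> complex) set \<Rightarrow> enat" where
  "delta_set S = (SUP s\<in>S. enat (findex s))"

definition delta_alg :: "(complex \<Rightarrow> 'a::ring_1 \<Rightarrow> 'a) \<Rightarrow> ('i \<Rightarrow> 'a) \<Rightarrow> 'i set \<Rightarrow> enat" where
  "delta_alg sm gen I =
     (INF S\<in>{S. S \<subseteq> fpoly I \<and> fideal I S = fker sm gen I}. delta_set S)"

definition sq :: "(complex \<Rightarrow> 'a::ring_1 \<Rightarrow> 'a) \<Rightarrow> 'a set \<Rightarrow> 'a set" where
  "sq sm C = module.span sm {a * b | a b. a \<in> C \<and> b \<in> C}"

definition lin_on :: "(complex \<Rightarrow> 'a::ring_1 \<Rightarrow> 'a) \<Rightarrow> 'a set \<Rightarrow> ('a \<Rightarrow> complex) \<Rightarrow> bool" where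
  "lin_on sm V L \<longleftrightarrow> (\<forall>a\<in>V. \<forall>b\<in>V. L (a + b) = L a + L b) \<and> (\<forall>c. \<forall>a\<in>V. L (sm c a) = c * L a)"

definition herm_on :: "(complex \<Rightarrow> 'a::ring_1 \<Rightarrow> 'a) \<Rightarrow> ('a \<Rightarrow> 'a) \<Rightarrow> 'a set \<Rightarrow> ('a \<Rightarrow> complex) \<Rightarrow> bool" where
  "herm_on sm st V L \<longleftrightarrow> lin_on sm V L \<and> (\<forall>b\<in>V. L (st b) = cnj (L b))"

definition form :: "('a::times \<Rightarrow> complex) \<Rightarrow> ('a \<Rightarrow> 'a) \<Rightarrow> 'a \<Rightarrow> 'a \<Rightarrow> complex" where
  "form L st a b = L (st b * a)"

definition kerL :: "('a::times \<Rightarrow> 'a) \<Rightarrow> ('a \<Rightarrow> complex) \<Rightarrow> 'a set \<Rightarrow> 'a set" where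
  "kerL st L C = {a \<in> C. \<forall>b\<in>C. form L st a b = 0}"

definition positive_on :: "('a::times \<Rightarrow> 'a) \<Rightarrow> 'a set \<Rightarrow> ('a \<Rightarrow> complex) \<Rightarrow> bool" where
  "positive_on st C L \<longleftrightarrow> (\<forall>a\<in>C. 0 \<le> L (st a * a))"

definition flat_ext :: "('a::{plus,times} \<Rightarrow> 'a) \<Rightarrow> ('a \<Rightarrow> complex) \<Rightarrow> 'a set \<Rightarrow> 'a set \<Rightarrow> bool" where
  "flat_ext st L B C \<longleftrightarrow> C = setplus B (kerL st L C)"

text \<open>*-representation of the algebra on the space V with hermitian form f; operators are
functions on the whole type, considered on V only.\<close>
definition star_rep :: "(complex \<Rightarrow> 'a::ring_1 \<Rightarrow> 'a) \<Rightarrow> ('a \<Rightarrow> 'a) \<Rightarrow> 'a set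
     \<Rightarrow> ('a \<Rightarrow> 'a \<Rightarrow> complex) \<Rightarrow> ('a \<Rightarrow> 'a \<Rightarrow> 'a) \<Rightarrow> bool" where
  "star_rep sm st V f \<rho> \<longleftrightarrow>
     (\<forall>a. \<forall>v\<in>V. \<rho> a v \<in> V) \<and>
     (\<forall>a. \<forall>v\<in>V. \<forall>w\<in>V. \<rho> a (v + w) = \<rho> a v + \<rho> a w) \<and>
     (\<forall>a c. \<forall>v\<in>V. \<rho> a (sm c v) = sm c (\<rho> a v)) \<and>
     (\<forall>a b. \<forall>v\<in>V. \<rho> (a + b) v = \<rho> a v + \<rho> b v) \<and>
     (\<forall>a c. \<forall>v\<in>V. \<rho> (sm c a) v = sm c (\<rho> a v)) \<and>
     (\<forall>a b. \<forall>v\<in>V. \<rho> (a * b) v = \<rho> a (\<rho> b v)) \<and>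
     (\<forall>v\<in>V. \<rho> 1 v = v) \<and>
     (\<forall>a. \<forall>v\<in>V. \<forall>w\<in>V. f (\<rho> a v) w = f v (\<rho> (st a) w))"

end

theory Submission
  imports Defs
begin


locale fe = vector_space sm for sm :: "complex \<Rightarrow> 'a::ring_1 \<Rightarrow> 'a" +
  fixes st :: "'a \<Rightarrow> 'a" and gen :: "'i \<Rightarrow> 'a" and I :: "'i set"
    and B C :: "'a set" and L :: "'a \<Rightarrow> complex" and m :: nat
  assumes sm_ml: "\<And>c a b. sm c (a * b) = sm c a * b"
    and sm_mr: "\<And>c a b. sm c (a * b) = a * sm c b"
    and st_add: "\<And>a b. st (a + b) = st a + st b"
    and st_sm: "\<And>c a. st (sm c a) = sm (cnj c) (st a)"
    and st_mult: "\<And>a b. st (a * b) = st b * st a"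
    and st_st: "\<And>a. st (st a) = a"
    and gen_star: "\<forall>i\<in>I. \<exists>j\<in>I. st (gen i) = gen j"
    and gen_gen: "generates sm gen I"
    and B_sub: "subspace B" and B_star: "star_inv st B"
    and C_sub: "subspace C" and C_star: "star_inv st C"
    and BC: "B \<subseteq> C" and one_B: "1 \<in> B"
    and C_conn: "connected_to_1 sm gen I C"
    and m1: "1 \<le> m"
    and Bm: "(prol sm gen I ^^ m) B \<subseteq> C"
    and delta: "delta_alg sm gen I \<le> enat (2 * m)"
    and L_herm: "herm_on sm st (sq sm C) L"
    and L_flat: "flat_ext st L B C"
begin

lemma st_1[simp]: "st 1 = 1"
  by (metis mult_1_left mult_1_right st_mult st_st)

lemma st_0[simp]: "st 0 = 0"
  by (metis add_cancel_right_right st_add)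

lemma st_neg: "st (- a) = - st a"
  by (metis add.right_inverse add_eq_0_iff st_0 st_add)

lemma st_diff: "st (a - b) = st a - st b"
  by (metis diff_conv_add_uminus st_add st_neg)

lemma sm_neg1: "sm (-1) x = - x"
  by (metis add.inverse_unique add.right_inverse scale_left_distrib scale_one scale_zero_left)

lemma sm_minus: "sm c (- x) = - sm c x"
  by (metis add.inverse_unique add.right_inverse scale_right_distrib scale_zero_right)

lemma sm_diff: "sm c (x - y) = sm c x - sm c y"
  by (metis diff_conv_add_uminus scale_right_distrib sm_minus)

definition K where "K = kerL st L C"

lemma one_C: "1 \<in> C"
  using C_conn unfolding connected_to_1_def by auto

lemma L_add: "x \<in> sq sm C \<Longrightarrow> y \<in> sq sm C \<Longrightarrow> L (x + y) = L x + L y"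
  using L_herm unfolding herm_on_def lin_on_def by auto

lemma L_sm: "x \<in> sq sm C \<Longrightarrow> L (sm c x) = c * L x"
  using L_herm unfolding herm_on_def lin_on_def by auto

lemma L_st: "x \<in> sq sm C \<Longrightarrow> L (st x) = cnj (L x)"
  using L_herm unfolding herm_on_def by auto

lemma sqC_sub: "subspace (sq sm C)"
  unfolding sq_def by simp

lemma prod_sqC: "a \<in> C \<Longrightarrow> b \<in> C \<Longrightarrow> a * b \<in> sq sm C"
  unfolding sq_def by (rule span_base) auto

lemma C_sqC: "a \<in> C \<Longrightarrow> a \<in> sq sm C"
  using prod_sqC[OF one_C, of a] by simp

lemma L_0: "L 0 = 0"
  using L_sm[of 0 0] subspace_0[OF sqC_sub] by simp

lemma L_neg: "x \<in> sq sm C \<Longrightarrow> L (- x) = - L x"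
  using L_sm[of x "-1"] by (simp add: sm_neg1)

lemma L_diff: "x \<in> sq sm C \<Longrightarrow> y \<in> sq sm C \<Longrightarrow> L (x - y) = L x - L y"
  by (metis L_add L_neg diff_conv_add_uminus sqC_sub subspace_neg)

lemma st_C: "a \<in> C \<Longrightarrow> st a \<in> C"
  using C_star unfolding star_inv_def by auto

lemma st_B: "a \<in> B \<Longrightarrow> st a \<in> B"
  using B_star unfolding star_inv_def by auto

lemma K_C: "K \<subseteq> C"
  unfolding K_def kerL_def by auto

lemma K_iff: "k \<in> K \<longleftrightarrow> k \<in> C \<and> (\<forall>b\<in>C. L (st b * k) = 0)"
  unfolding K_def kerL_def form_def by auto

lemma K_left: "k \<in> K \<Longrightarrow> b \<in> C \<Longrightarrow> L (st b * k) = 0"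
  using K_iff by auto

lemma K_right: "k \<in> K \<Longrightarrow> b \<in> C \<Longrightarrow> L (st k * b) = 0"
proof -
  assume k: "k \<in> K" and b: "b \<in> C"
  have "st (st k * b) = st b * k" by (simp add: st_mult st_st)
  moreover have "st k * b \<in> sq sm C" using k b K_C by (auto intro: prod_sqC st_C)
  ultimately have "L (st b * k) = cnj (L (st k * b))" by (metis L_st)
  thus ?thesis using K_left[OF k b] by simp
qed

lemma K_sub: "subspace K"
proof (rule subspaceI)
  show "0 \<in> K" unfolding K_iff using subspace_0[OF C_sub] L_0 by simp
next
  fix x y assume x: "x \<in> K" and y: "y \<in> K"
  show "x + y \<in> K" unfolding K_iff
  proof safe
    show "x + y \<in> C" using x y K_C subspace_add[OF C_sub] by auto
    fix b assume b: "b \<in> C"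
    have "L (st b * (x + y)) = L (st b * x) + L (st b * y)"
      using x y b K_C by (simp add: distrib_left L_add prod_sqC st_C subset_iff)
    thus "L (st b * (x + y)) = 0" using x y b K_left by simp
  qed
next
  fix c x assume x: "x \<in> K"
  show "sm c x \<in> K" unfolding K_iff
  proof safe
    show "sm c x \<in> C" using x K_C subspace_scale[OF C_sub] by auto
    fix b assume b: "b \<in> C"
    have "L (st b * sm c x) = c * L (st b * x)"
      using x b K_C by (simp add: sm_mr[symmetric] L_sm prod_sqC st_C subset_iff)
    thus "L (st b * sm c x) = 0" using x b K_left by simp
  qed
qed

lemma flatC: "C = setplus B K"
  using L_flat unfolding flat_ext_def K_def by simp

lemma decompC: "c \<in> C \<Longrightarrow> \<exists>b k. b \<in> B \<and> k \<in> K \<and> c = b + k"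
proof -
  assume "c \<in> C" hence "c \<in> setplus B K" using flatC by simp
  thus ?thesis unfolding setplus_def by blast
qed

lemma setplus_sub: "subspace V \<Longrightarrow> subspace W \<Longrightarrow> subspace (setplus V W)"
  unfolding setplus_def subspace_def
  apply safe
    apply (metis add_0)
   apply (rule_tac x="u+ua" in exI, rule_tac x="w+wa" in exI, simp add: algebra_simps)
  apply (rule_tac x="sm c u" in exI, rule_tac x="sm c w" in exI, simp add: scale_right_distrib)
  done

lemma prol_subspace: "subspace V \<Longrightarrow> subspace (prol sm gen I V)"
  unfolding prol_def by (intro setplus_sub) auto

lemma prol_sup: "V \<subseteq> prol sm gen I V"
proof
  fix v assume "v \<in> V"
  moreover have "0 \<in> span {gen i * v |i v. i \<in> I \<and> v \<in> V}" by (rule span_zero)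
  ultimately show "v \<in> prol sm gen I V" unfolding prol_def setplus_def by force
qed

lemma prol_gen: "subspace V \<Longrightarrow> i \<in> I \<Longrightarrow> v \<in> V \<Longrightarrow> gen i * v \<in> prol sm gen I V"
proof -
  assume V: "subspace V" and "i \<in> I" "v \<in> V"
  hence "gen i * v \<in> span {gen i * v |i v. i \<in> I \<and> v \<in> V}" by (intro span_base) auto
  moreover have "0 \<in> V" using V subspace_0 by auto
  ultimately show ?thesis unfolding prol_def setplus_def by force
qed

abbreviation P where "P k \<equiv> (prol sm gen I ^^ k) B"

lemma P_sub: "subspace (P k)"
  by (induction k) (auto simp: B_sub prol_subspace)

lemma P_mono: "k \<le> k' \<Longrightarrow> P k \<subseteq> P k'"
proof (induction k' )
  case 0 thus ?case by simp
next
  case (Suc k')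
  have "P k' \<subseteq> P (Suc k')" using prol_sup[of "P k'"] by simp
  thus ?case using Suc by (metis le_Suc_eq order_refl subset_trans)
qed

lemma P_C: "k \<le> m \<Longrightarrow> P k \<subseteq> C"
  using P_mono Bm by blast

lemma P_Suc: "P (Suc k) = prol sm gen I (P k)"
  by simp

lemma genB_C: "i \<in> I \<Longrightarrow> b \<in> B \<Longrightarrow> gen i * b \<in> C"
proof -
  assume "i \<in> I" "b \<in> B"
  hence "gen i * b \<in> P 1" using prol_gen[OF B_sub] by simp
  thus ?thesis using P_C m1 by blast
qed

lemma st_gen: "i \<in> I \<Longrightarrow> \<exists>j\<in>I. st (gen i) = gen j"
  using gen_star by auto

definition M where "M = span ({gen i * k | i k. i \<in> I \<and> k \<in> K} \<union> K)"

lemma M_K: "x \<in> M \<Longrightarrow> x \<in> C \<Longrightarrow> x \<in> K"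
proof -
  assume xM: "x \<in> M" and xC: "x \<in> C"
  let ?Q = "\<lambda>x. \<forall>b\<in>B. st b * x \<in> sq sm C \<and> L (st b * x) = 0"
  have Q: "?Q x" using xM unfolding M_def
  proof (induction rule: span_induct)
    case base
    show ?case
    proof (rule subspaceI)
      show "0 \<in> Collect ?Q" using subspace_0[OF sqC_sub] L_0 by simp
      show "x + y \<in> Collect ?Q" if "x \<in> Collect ?Q" "y \<in> Collect ?Q" for x y
        using that by (auto simp: distrib_left L_add subspace_add[OF sqC_sub])
      show "sm c x \<in> Collect ?Q" if "x \<in> Collect ?Q" for c x
        using that by (auto simp: sm_mr[symmetric] L_sm subspace_scale[OF sqC_sub])
    qed
  next
    case (step y)
    show ?case
    proof
      fix b assume b: "b \<in> B"
      hence bC: "st b \<in> C" using BC st_B by auto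
      from step show "st b * y \<in> sq sm C \<and> L (st b * y) = 0"
      proof
        assume "y \<in> {gen i * k |i k. i \<in> I \<and> k \<in> K}"
        then obtain i k where i: "i \<in> I" and k: "k \<in> K" and y: "y = gen i * k" by auto
        obtain j where j: "j \<in> I" "st (gen i) = gen j" using st_gen[OF i] by auto
        have e: "st b * y = st (gen j * b) * k"
          by (metis y j(2) st_mult st_st mult.assoc)
        have gC: "gen j * b \<in> C" using genB_C[OF j(1) b] .
        show ?thesis unfolding e using K_left[OF k gC] prod_sqC[OF st_C[OF gC]] k K_C by auto
      next
        assume y: "y \<in> K"
        show ?thesis using K_left[OF y, of b] b BC y K_C prod_sqC bC by auto
      qed
    qed
  qed
  show "x \<in> K" unfolding K_iff
  proof safe
    show "x \<in> C" by fact
    fix c assume c: "c \<in> C"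
    then obtain b k where b: "b \<in> B" and k: "k \<in> K" and cbk: "c = b + k" using decompC by blast
    have "L (st c * x) = L (st b * x) + L (st k * x)"
      unfolding cbk st_add distrib_right
      using Q b k K_C xC by (intro L_add) (auto intro: prod_sqC st_C)
    thus "L (st c * x) = 0" using Q b K_right[OF k xC] by simp
  qed
qed

lemma M_sub: "subspace M"
  unfolding M_def by simp

lemma K_M: "K \<subseteq> M"
  unfolding M_def by (meson Un_subset_iff span_superset)

lemma genK_M: "i \<in> I \<Longrightarrow> k \<in> K \<Longrightarrow> gen i * k \<in> M"
  unfolding M_def by (rule span_base) auto

lemma prol_M: "V \<subseteq> K \<Longrightarrow> prol sm gen I V \<subseteq> M"
proof
  fix x assume V: "V \<subseteq> K" and x: "x \<in> prol sm gen I V"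
  then obtain u w where u: "u \<in> V" and w: "w \<in> span {gen i * v |i v. i \<in> I \<and> v \<in> V}" and xe: "x = u + w"
    unfolding prol_def setplus_def by blast
  have "span {gen i * v |i v. i \<in> I \<and> v \<in> V} \<subseteq> M"
    by (rule span_minimal) (use V genK_M M_sub in auto)
  thus "x \<in> M" using u w V K_M xe subspace_add[OF M_sub] by blast
qed

lemma C_conn': obtains Vs where "Vs 0 = span {1}" "\<And>l. subspace (Vs l)" "\<And>l. Vs l \<subseteq> Vs (Suc l)"
   "\<And>l. Vs (Suc l) \<subseteq> prol sm gen I (Vs l)" "(\<Union>l. Vs l) = C"
  using C_conn unfolding connected_to_1_def by blast

lemma one_K_C: assumes "1 \<in> K" shows "C \<subseteq> K"
proof -
  obtain Vs where V0: "Vs 0 = span {1}" and Vsub: "\<And>l. subspace (Vs l)"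
    and Vpr: "\<And>l. Vs (Suc l) \<subseteq> prol sm gen I (Vs l)" and VC: "(\<Union>l. Vs l) = C"
    using C_conn' by metis
  have "Vs l \<subseteq> K" for l
  proof (induction l)
    case 0 thus ?case unfolding V0 using assms K_sub by (simp add: span_minimal)
  next
    case (Suc l)
    show ?case
    proof
      fix x assume x: "x \<in> Vs (Suc l)"
      hence "x \<in> M" using prol_M[OF Suc] Vpr by blast
      moreover have "x \<in> C" using x VC by blast
      ultimately show "x \<in> K" using M_K by blast
    qed
  qed
  thus ?thesis using VC by blast
qed

lemma L_zero_if: assumes "1 \<in> K" and "x \<in> sq sm C" shows "L x = 0"
proof -
  have xs: "x \<in> span {a * b | a b. a \<in> C \<and> b \<in> C}" using assms(2) by (simp add: sq_def)
  have "x \<in> sq sm C \<and> L x = 0" using xs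
  proof (induction rule: span_induct)
    case base
    show ?case
    proof (rule subspaceI)
      show "0 \<in> Collect (\<lambda>x. x \<in> sq sm C \<and> L x = 0)" using subspace_0[OF sqC_sub] L_0 by simp
    qed (auto simp: L_add L_sm subspace_add[OF sqC_sub] subspace_scale[OF sqC_sub])
  next
    case (step y)
    then obtain a b where a: "a \<in> C" and b: "b \<in> C" and y: "y = a * b" by auto
    have "b \<in> K" using one_K_C[OF assms(1)] b by auto
    hence "L (st (st a) * b) = 0" using K_left st_C[OF a] by blast
    thus ?case using y st_st prod_sqC[OF a b] by (simp add: sq_def)
  qed
  thus ?thesis by simp
qed

lemma span_disjoint:
  assumes T: "independent T" and S: "S \<subseteq> T"
    and x1: "x \<in> span (T - S)" and x2: "x \<in> span S"
  shows "x = 0"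
proof -
  obtain f where f: "{v. f v \<noteq> 0} \<subseteq> T - S" "finite {v. f v \<noteq> 0}" and xf: "x = (\<Sum>v | f v \<noteq> 0. sm (f v) v)"
    using x1 unfolding span_alt by blast
  obtain g where g: "{v. g v \<noteq> 0} \<subseteq> S" "finite {v. g v \<noteq> 0}" and xg: "x = (\<Sum>v | g v \<noteq> 0. sm (g v) v)"
    using x2 unfolding span_alt by blast
  have "f = g"
    by (rule unique_representation[OF T]) (use f g S xf xg in auto)
  hence "{v. f v \<noteq> 0} = {}" using f g by auto
  thus ?thesis using xf by simp
qed

lemma exists_Bp:
  assumes nz: "\<exists>x\<in>sq sm C. L x \<noteq> 0"
  shows "\<exists>B'. subspace B' \<and> B' \<subseteq> B \<and> 1 \<in> B' \<and> direct_sum B' K C"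
proof -
  have one: "1 \<notin> K" using L_zero_if nz by blast
  obtain S0 where S0: "S0 \<subseteq> B \<inter> K" "independent S0" "B \<inter> K \<subseteq> span S0"
    using maximal_independent_subset by blast
  have spS0: "span S0 \<subseteq> K" using S0 K_sub span_minimal by blast
  have ind1: "independent (insert 1 S0)"
    using one spS0 S0(2) independent_insertI by blast
  obtain T where T: "insert 1 S0 \<subseteq> T" "T \<subseteq> B" "independent T" "B \<subseteq> span T"
    using maximal_independent_subset_extend[OF _ ind1, of B] S0 one_C
    by (metis Int_subset_iff insert_subset one_B)
  define B' where "B' = span (T - S0)"
  have B'B: "B' \<subseteq> B" unfolding B'_def using T(2) B_sub span_minimal by blast
  have one': "1 \<in> B'" unfolding B'_def using T(1) one spS0 span_superset by (intro span_base) blast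
  have int: "B' \<inter> K = {0}"
  proof safe
    fix x assume x: "x \<in> B'" "x \<in> K"
    hence "x \<in> span S0" using B'B S0(3) by blast
    thus "x = 0" using span_disjoint[OF T(3) _ x(1)[unfolded B'_def]] S0(1) T(1) by blast
  qed (auto simp: B'_def span_zero subspace_0[OF K_sub])
  have sp: "setplus B' K = C"
  proof safe
    fix x assume "x \<in> setplus B' K"
    then obtain u w where "u \<in> B'" "w \<in> K" "x = u + w" unfolding setplus_def by blast
    thus "x \<in> C" using B'B BC K_C subspace_add[OF C_sub] by blast
  next
    fix c assume "c \<in> C"
    then obtain b k where b: "b \<in> B" and k: "k \<in> K" and cbk: "c = b + k" using decompC by blast
    have "b \<in> span ((T - S0) \<union> S0)" using T(4) b T(1) by (metis Un_Diff_cancel2 insert_subset sup.absorb1 subsetD)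
    then obtain y1 y2 where y: "y1 \<in> span (T - S0)" "y2 \<in> span S0" "b = y1 + y2"
      unfolding span_Un by blast
    have "y2 + k \<in> K" using y(2) spS0 k subspace_add[OF K_sub] by blast
    moreover have "c = y1 + (y2 + k)" using y cbk by (simp add: add.assoc)
    ultimately show "c \<in> setplus B' K" using y(1) unfolding setplus_def B'_def by blast
  qed
  show ?thesis
    by (rule exI[of _ B']) (simp add: B'_def[symmetric] B'B one' direct_sum_def int sp, simp add: B'_def)
qed


lemma kerU_iff: "a \<in> kerL st Lx UNIV \<longleftrightarrow> (\<forall>b. Lx (st b * a) = 0)"
  unfolding kerL_def form_def by auto

lemma kerU_sub: assumes "herm_on sm st UNIV Lx" shows "subspace (kerL st Lx UNIV)"
proof -
  have lin: "Lx (a + b) = Lx a + Lx b" "Lx (sm c a) = c * Lx a" for a b c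
    using assms unfolding herm_on_def lin_on_def by auto
  show ?thesis
  proof (rule subspaceI)
    show "0 \<in> kerL st Lx UNIV" unfolding kerU_iff using lin(2)[of 0 0] by simp
    show "x + y \<in> kerL st Lx UNIV" if "x \<in> kerL st Lx UNIV" "y \<in> kerL st Lx UNIV" for x y
      using that unfolding kerU_iff by (simp add: distrib_left lin)
    show "sm c x \<in> kerL st Lx UNIV" if "x \<in> kerL st Lx UNIV" for c x
      using that unfolding kerU_iff by (simp add: sm_mr[symmetric] lin)
  qed
qed

lemma kerU_left: "k \<in> kerL st Lx UNIV \<Longrightarrow> a * k \<in> kerL st Lx UNIV"
  unfolding kerU_iff by (metis mult.assoc st_mult st_st)

lemma kerU_right: assumes "herm_on sm st UNIV Lx" "k \<in> kerL st Lx UNIV" shows "Lx (st k * a) = 0"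
proof -
  have "Lx (st (st a * k)) = cnj (Lx (st a * k))" using assms(1) unfolding herm_on_def by auto
  moreover have "st (st a * k) = st k * a" by (simp add: st_mult st_st)
  ultimately show ?thesis using assms(2) unfolding kerU_iff by simp
qed

lemma K_kerU:
  assumes h: "herm_on sm st UNIV Lx" and ext: "\<forall>x\<in>sq sm C. Lx x = L x"
    and fl: "flat_ext st Lx C UNIV"
  shows "K \<subseteq> kerL st Lx UNIV"
proof
  fix k assume k: "k \<in> K"
  have lin: "Lx (a + b) = Lx a + Lx b" for a b
    using h unfolding herm_on_def lin_on_def by auto
  show "k \<in> kerL st Lx UNIV" unfolding kerU_iff
  proof
    fix b
    have "b \<in> setplus C (kerL st Lx UNIV)" using fl unfolding flat_ext_def by auto
    then obtain c k' where c: "c \<in> C" and k': "k' \<in> kerL st Lx UNIV" and bck: "b = c + k'"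
      unfolding setplus_def by blast
    have "Lx (st b * k) = Lx (st c * k) + Lx (st k' * k)"
      unfolding bck st_add distrib_right lin ..
    also have "Lx (st c * k) = L (st c * k)" using ext prod_sqC[OF st_C[OF c]] k K_C by auto
    also have "\<dots> = 0" using K_left[OF k] st_st c by (metis)
    also have "Lx (st k' * k) = 0" using kerU_right[OF h k'] .
    finally show "Lx (st b * k) = 0" by simp
  qed
qed

lemma flat_CB:
  assumes h: "herm_on sm st UNIV Lx" and ext: "\<forall>x\<in>sq sm C. Lx x = L x"
  shows "flat_ext st Lx C UNIV \<longleftrightarrow> flat_ext st Lx B UNIV"
proof
  assume fl: "flat_ext st Lx C UNIV"
  have KK: "K \<subseteq> kerL st Lx UNIV" using K_kerU[OF h ext fl] .
  show "flat_ext st Lx B UNIV" unfolding flat_ext_def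
  proof (rule sym, rule set_eqI, rule iffI)
    fix x :: 'a
    have "x \<in> setplus C (kerL st Lx UNIV)" using fl unfolding flat_ext_def by auto
    then obtain c k' where c: "c \<in> C" and k': "k' \<in> kerL st Lx UNIV" and bck: "x = c + k'"
      unfolding setplus_def by blast
    obtain b k where b: "b \<in> B" and k: "k \<in> K" and cbk: "c = b + k" using decompC[OF c] by blast
    have "k + k' \<in> kerL st Lx UNIV" using KK k k' subspace_add[OF kerU_sub[OF h]] by blast
    moreover have "x = b + (k + k')" using bck cbk by (simp add: add.assoc)
    ultimately show "x \<in> setplus B (kerL st Lx UNIV)" using b unfolding setplus_def by blast
  qed simp
next
  assume fl: "flat_ext st Lx B UNIV"
  show "flat_ext st Lx C UNIV" unfolding flat_ext_def
  proof (rule sym, rule set_eqI, rule iffI)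
    fix x :: 'a
    have "x \<in> setplus B (kerL st Lx UNIV)" using fl unfolding flat_ext_def by auto
    thus "x \<in> setplus C (kerL st Lx UNIV)" using BC unfolding setplus_def by blast
  qed simp
qed

end



lemma (in module) proj_unique:
  assumes U: "subspace U" and W: "subspace W" and UW: "U \<inter> W = {0}"
    and u: "u \<in> U" and xu: "x - u \<in> W"
  shows "proj U W x = u"
  unfolding proj_def
proof (rule the_equality)
  show "u \<in> U \<and> x - u \<in> W" using u xu by simp
  fix u' assume u': "u' \<in> U \<and> x - u' \<in> W"
  have "u' - u \<in> U" using u u' subspace_diff[OF U] by blast
  moreover have "u' - u = (x - u) - (x - u')" by simp
  hence "u' - u \<in> W" using xu u' subspace_diff[OF W] by metis
  ultimately have "u' - u = 0" using UW by blast
  thus "u' = u" by simp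
qed

context fe
begin

definition Ew :: "('i list \<Rightarrow> 'a) \<Rightarrow> ('i list \<Rightarrow> complex) \<Rightarrow> 'a" where
  "Ew f p = (\<Sum>w | p w \<noteq> 0. sm (p w) (f w))"

lemma fsigma_Ew: "fsigma sm gen p = Ew (word_prod gen) p"
  unfolding fsigma_def Ew_def ..

lemma Ew_superset: "finite U \<Longrightarrow> {w. p w \<noteq> 0} \<subseteq> U \<Longrightarrow> Ew f p = (\<Sum>w\<in>U. sm (p w) (f w))"
  unfolding Ew_def by (rule sum.mono_neutral_left) auto

lemma Ew_add: assumes "finite {w. p w \<noteq> 0}" "finite {w. q w \<noteq> 0}"
  shows "Ew f (\<lambda>w. p w + q w) = Ew f p + Ew f q"
proof -
  let ?U = "{w. p w \<noteq> 0} \<union> {w. q w \<noteq> 0}"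
  have "Ew f (\<lambda>w. p w + q w) = (\<Sum>w\<in>?U. sm (p w + q w) (f w))"
    by (rule Ew_superset) (use assms in auto)
  also have "\<dots> = (\<Sum>w\<in>?U. sm (p w) (f w)) + (\<Sum>w\<in>?U. sm (q w) (f w))"
    by (simp add: scale_left_distrib sum.distrib)
  also have "\<dots> = Ew f p + Ew f q"
  proof -
    have "Ew f p = (\<Sum>w\<in>?U. sm (p w) (f w))" "Ew f q = (\<Sum>w\<in>?U. sm (q w) (f w))"
      by (rule Ew_superset, use assms in auto)+
    thus ?thesis by simp
  qed
  finally show ?thesis .
qed

lemma Ew_smult: assumes "finite {w. p w \<noteq> 0}"
  shows "Ew f (\<lambda>w. c * p w) = sm c (Ew f p)"
proof -
  have "Ew f (\<lambda>w. c * p w) = (\<Sum>w\<in>{w. p w \<noteq> 0}. sm (c * p w) (f w))"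
    by (rule Ew_superset) (use assms in auto)
  also have "\<dots> = sm c (Ew f p)" unfolding Ew_def by (simp add: scale_sum_right)
  finally show ?thesis .
qed

lemma Ew_zero: "Ew f (\<lambda>_. 0) = 0"
  unfolding Ew_def by simp

lemma Ew_cong: "(\<And>w. p w \<noteq> 0 \<Longrightarrow> f w = g w) \<Longrightarrow> Ew f p = Ew g p"
  unfolding Ew_def by (rule sum.cong) auto

lemma Ew_delta: "Ew f (\<lambda>u. if u = w then 1 else 0) = f w"
proof -
  have "{u. (if u = w then 1 else 0) \<noteq> (0::complex)} = {w}" by auto
  thus ?thesis unfolding Ew_def by simp
qed

lemma supp_flmul: "{w. flmul i p w \<noteq> 0} = (Cons i) ` {w. p w \<noteq> 0}"
proof (rule set_eqI, rule iffI)
  fix x assume x: "x \<in> {w. flmul i p w \<noteq> 0}"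
  then obtain j v where "x = j # v" unfolding flmul_def by (cases x) auto
  with x have "x = i # v" "p v \<noteq> 0" unfolding flmul_def by (auto split: if_splits)
  thus "x \<in> (Cons i) ` {w. p w \<noteq> 0}" by blast
next
  fix x assume "x \<in> (Cons i) ` {w. p w \<noteq> 0}"
  then obtain w where "x = i # w" "p w \<noteq> 0" by blast
  thus "x \<in> {w. flmul i p w \<noteq> 0}" unfolding flmul_def by simp
qed

lemma Ew_flmul: "Ew f (flmul i p) = Ew (\<lambda>w. f (i # w)) p"
proof -
  have supp: "{w. flmul i p w \<noteq> 0} = (Cons i) ` {w. p w \<noteq> 0}"
    by (rule supp_flmul)
  show ?thesis unfolding Ew_def supp
    by (subst sum.reindex) (auto simp: flmul_def)
qed

lemma supp_frmul: "{w. frmul i p w \<noteq> 0} = (\<lambda>w. w @ [i]) ` {w. p w \<noteq> 0}"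
proof (rule set_eqI, rule iffI)
  fix x assume "x \<in> {w. frmul i p w \<noteq> 0}"
  hence x: "x \<noteq> []" "last x = i" "p (butlast x) \<noteq> 0" unfolding frmul_def by (auto split: if_splits)
  hence "x = butlast x @ [i]" by (metis append_butlast_last_id)
  thus "x \<in> (\<lambda>w. w @ [i]) ` {w. p w \<noteq> 0}" using x(3) by blast
next
  fix x assume "x \<in> (\<lambda>w. w @ [i]) ` {w. p w \<noteq> 0}"
  then obtain w where "x = w @ [i]" "p w \<noteq> 0" by blast
  thus "x \<in> {w. frmul i p w \<noteq> 0}" unfolding frmul_def by simp
qed

lemma Ew_frmul: "Ew f (frmul i p) = Ew (\<lambda>w. f (w @ [i])) p"
proof -
  have supp: "{w. frmul i p w \<noteq> 0} = (\<lambda>w. w @ [i]) ` {w. p w \<noteq> 0}"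
    by (rule supp_frmul)
  have inj: "inj_on (\<lambda>w. w @ [i]) X" for X by (auto simp: inj_on_def)
  show ?thesis unfolding Ew_def supp
    by (subst sum.reindex[OF inj]) (auto simp: frmul_def)
qed

lemma Ew_in: "subspace U \<Longrightarrow> (\<And>w. p w \<noteq> 0 \<Longrightarrow> f w \<in> U) \<Longrightarrow> Ew f p \<in> U"
  unfolding Ew_def by (rule subspace_sum) (auto intro: subspace_scale)

lemma sum_hom_on:
  assumes U: "subspace U" and hadd: "\<And>x y. x \<in> U \<Longrightarrow> y \<in> U \<Longrightarrow> h (x + y) = h x + h y"
    and h0: "h 0 = 0"
    and fin: "finite A" and fU: "\<And>a. a \<in> A \<Longrightarrow> g a \<in> U"
  shows "h (\<Sum>a\<in>A. g a) = (\<Sum>a\<in>A. h (g a))"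
  using fin fU
proof (induction A rule: finite_induct)
  case empty thus ?case using h0 by simp
next
  case (insert a A)
  have "(\<Sum>a\<in>A. g a) \<in> U" using insert U by (auto intro: subspace_sum)
  thus ?case using insert hadd by simp
qed

lemma Ew_hom:
  assumes U: "subspace U" and hadd: "\<And>x y. x \<in> U \<Longrightarrow> y \<in> U \<Longrightarrow> h (x + y) = h x + h y"
    and hsm: "\<And>c x. x \<in> U \<Longrightarrow> h (sm c x) = sm c (h x)"
    and fin: "finite {w. p w \<noteq> 0}" and fU: "\<And>w. p w \<noteq> 0 \<Longrightarrow> f w \<in> U"
  shows "h (Ew f p) = Ew (\<lambda>w. h (f w)) p" (is "_ = ?rhs")
proof -
  have h0: "h 0 = 0" using hsm[of 0 0] subspace_0[OF U] by simp
  have "h (Ew f p) = (\<Sum>w | p w \<noteq> 0. h (sm (p w) (f w)))"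
    unfolding Ew_def by (rule sum_hom_on[OF U hadd h0 fin]) (auto intro: subspace_scale[OF U] fU)
  also have "\<dots> = ?rhs" unfolding Ew_def by (rule sum.cong) (auto simp: hsm fU)
  finally show ?thesis .
qed

lemma Ew_hom_c:
  assumes U: "subspace U" and hadd: "\<And>x y. x \<in> U \<Longrightarrow> y \<in> U \<Longrightarrow> h (x + y) = h x + h y"
    and hsm: "\<And>c x. x \<in> U \<Longrightarrow> h (sm c x) = c * (h x)"
    and fin: "finite {w. p w \<noteq> 0}" and fU: "\<And>w. p w \<noteq> 0 \<Longrightarrow> f w \<in> U"
  shows "h (Ew f p) = (\<Sum>w | p w \<noteq> 0. p w * h (f w))" (is "_ = ?rhs")
proof -
  have h0: "h 0 = 0" using hsm[of 0 0] subspace_0[OF U] by simp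
  have "h (Ew f p) = (\<Sum>w | p w \<noteq> 0. h (sm (p w) (f w)))"
    unfolding Ew_def by (rule sum_hom_on[OF U hadd h0 fin]) (auto intro: subspace_scale[OF U] fU)
  also have "\<dots> = ?rhs" unfolding Ew_def by (rule sum.cong) (auto simp: hsm fU)
  finally show ?thesis .
qed

lemma fpoly_fin: "p \<in> fpoly I \<Longrightarrow> finite {w. p w \<noteq> 0}"
  unfolding fpoly_def by auto

lemma fpoly_I: "p \<in> fpoly I \<Longrightarrow> p w \<noteq> 0 \<Longrightarrow> set w \<subseteq> I"
  unfolding fpoly_def by auto

lemma fpoly_add: "p \<in> fpoly I \<Longrightarrow> q \<in> fpoly I \<Longrightarrow> (\<lambda>w. p w + q w) \<in> fpoly I"
proof -
  assume p: "p \<in> fpoly I" and q: "q \<in> fpoly I"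
  have "{w. p w + q w \<noteq> 0} \<subseteq> {w. p w \<noteq> 0} \<union> {w. q w \<noteq> 0}" by auto
  moreover have "finite ({w. p w \<noteq> 0} \<union> {w. q w \<noteq> 0})" using p q fpoly_fin by blast
  ultimately have "finite {w. p w + q w \<noteq> 0}" by (rule finite_subset)
  moreover have "\<forall>w. p w + q w \<noteq> 0 \<longrightarrow> set w \<subseteq> I"
    using p q fpoly_I by (metis add.right_neutral add_0)
  ultimately show ?thesis unfolding fpoly_def by simp
qed

lemma fpoly_smult: "p \<in> fpoly I \<Longrightarrow> (\<lambda>w. c * p w) \<in> fpoly I"
  unfolding fpoly_def by (auto intro: finite_subset[of _ "{w. p w \<noteq> 0}"])

lemma fpoly_zero: "(\<lambda>_. 0) \<in> fpoly I"
  unfolding fpoly_def by auto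

lemma fpoly_delta: "set w \<subseteq> I \<Longrightarrow> (\<lambda>u. if u = w then 1 else 0) \<in> fpoly I"
  unfolding fpoly_def by auto

lemma fpoly_flmul: "i \<in> I \<Longrightarrow> p \<in> fpoly I \<Longrightarrow> flmul i p \<in> fpoly I"
proof -
  assume i: "i \<in> I" and p: "p \<in> fpoly I"
  have supp: "{w. flmul i p w \<noteq> 0} = (Cons i) ` {w. p w \<noteq> 0}"
    by (rule supp_flmul)
  have "finite {w. flmul i p w \<noteq> 0}" unfolding supp using fpoly_fin[OF p] by simp
  moreover have "set w \<subseteq> I" if "flmul i p w \<noteq> 0" for w
  proof -
    have "w \<in> {w. flmul i p w \<noteq> 0}" using that by simp
    then obtain v where "w = i # v" "p v \<noteq> 0" unfolding supp by blast
    thus ?thesis using fpoly_I[OF p] i by auto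
  qed
  ultimately show ?thesis unfolding fpoly_def by blast
qed

lemma fpoly_frmul: "i \<in> I \<Longrightarrow> p \<in> fpoly I \<Longrightarrow> frmul i p \<in> fpoly I"
proof -
  assume i: "i \<in> I" and p: "p \<in> fpoly I"
  have supp: "{w. frmul i p w \<noteq> 0} = (\<lambda>w. w @ [i]) ` {w. p w \<noteq> 0}"
    by (rule supp_frmul)
  have "set w \<subseteq> I" if "frmul i p w \<noteq> 0" for w
  proof -
    from that have "w \<noteq> []" "last w = i" "p (butlast w) \<noteq> 0" unfolding frmul_def by (auto split: if_splits)
    hence "w = butlast w @ [i]" "set (butlast w) \<subseteq> I" using p fpoly_I by (auto simp: append_butlast_last_id)
    thus ?thesis using i by (metis Un_insert_right empty_set insert_subset list.simps(15) set_append sup_bot.right_neutral)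
  qed
  thus ?thesis using p unfolding fpoly_def supp[symmetric] by (auto simp: supp)
qed

lemma fsigma_add: "p \<in> fpoly I \<Longrightarrow> q \<in> fpoly I \<Longrightarrow> fsigma sm gen (\<lambda>w. p w + q w) = fsigma sm gen p + fsigma sm gen q"
  unfolding fsigma_Ew by (simp add: Ew_add fpoly_fin)

lemma fsigma_smult: "p \<in> fpoly I \<Longrightarrow> fsigma sm gen (\<lambda>w. c * p w) = sm c (fsigma sm gen p)"
  unfolding fsigma_Ew by (simp add: Ew_smult fpoly_fin)

lemma wp_Cons: "word_prod gen (i # w) = gen i * word_prod gen w"
  unfolding word_prod_def by simp

lemma wp_Nil: "word_prod gen [] = 1"
  unfolding word_prod_def by simp

lemma wp_app: "word_prod gen (u @ w) = word_prod gen u * word_prod gen w"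
  by (induction u) (auto simp: wp_Cons wp_Nil mult.assoc)

lemma fsigma_flmul: "p \<in> fpoly I \<Longrightarrow> fsigma sm gen (flmul i p) = gen i * fsigma sm gen p"
proof -
  assume p: "p \<in> fpoly I"
  have "gen i * Ew (word_prod gen) p = Ew (\<lambda>w. gen i * word_prod gen w) p"
    by (rule Ew_hom[of UNIV]) (auto simp: distrib_left sm_mr fpoly_fin[OF p])
  thus ?thesis unfolding fsigma_Ew Ew_flmul by (simp add: wp_Cons)
qed

lemma fsigma_delta: "fsigma sm gen (\<lambda>u. if u = w then 1 else 0) = word_prod gen w"
  unfolding fsigma_Ew by (rule Ew_delta)

lemma fsigma_onto: "\<exists>p\<in>fpoly I. fsigma sm gen p = a"
proof -
  have "a \<in> span {word_prod gen w | w. set w \<subseteq> I}"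
    using gen_gen unfolding generates_def by simp
  thus ?thesis
  proof (induction rule: span_induct)
    case base show ?case
    proof (rule subspaceI)
      show "0 \<in> {a. \<exists>p\<in>fpoly I. fsigma sm gen p = a}"
        using fpoly_zero by (force simp: fsigma_Ew Ew_zero)
      show "x + y \<in> {a. \<exists>p\<in>fpoly I. fsigma sm gen p = a}"
        if "x \<in> {a. \<exists>p\<in>fpoly I. fsigma sm gen p = a}" "y \<in> {a. \<exists>p\<in>fpoly I. fsigma sm gen p = a}" for x y
        using that fsigma_add fpoly_add by fastforce
      show "sm c x \<in> {a. \<exists>p\<in>fpoly I. fsigma sm gen p = a}"
        if "x \<in> {a. \<exists>p\<in>fpoly I. fsigma sm gen p = a}" for c x
        using that fsigma_smult fpoly_smult by fastforce
    qed
  next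
    case (step x)
    thus ?case using fpoly_delta fsigma_delta by fastforce
  qed
qed

end



locale fe2 = fe +
  fixes Bp :: "'a set"
  assumes Bp_sub: "subspace Bp" and Bp_B: "Bp \<subseteq> B" and one_Bp: "1 \<in> Bp"
    and ds: "direct_sum Bp K C"
begin

definition pr where "pr = proj Bp K"

lemma Bp_C: "Bp \<subseteq> C" using Bp_B BC by auto

lemma BpK: "Bp \<inter> K = {0}" using ds unfolding direct_sum_def by auto

lemma pr_unique: "u \<in> Bp \<Longrightarrow> x - u \<in> K \<Longrightarrow> pr x = u"
  unfolding pr_def by (rule proj_unique[OF Bp_sub K_sub BpK])

lemma pr_C: assumes c: "c \<in> C" shows "pr c \<in> Bp" "c - pr c \<in> K"
proof -
  have "c \<in> setplus Bp K" using ds c unfolding direct_sum_def by simp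
  then obtain u w where u: "u \<in> Bp" "w \<in> K" "c = u + w" unfolding setplus_def by blast
  hence "pr c = u" by (intro pr_unique) auto
  thus "pr c \<in> Bp" "c - pr c \<in> K" using u by auto
qed

lemma pr_Bp: "b \<in> Bp \<Longrightarrow> pr b = b"
  by (rule pr_unique) (auto simp: subspace_0[OF K_sub])

lemma pr_eq: assumes "x \<in> C" "y \<in> C" "x - y \<in> K" shows "pr x = pr y"
proof (rule pr_unique)
  show "pr y \<in> Bp" using pr_C assms by blast
  have "x - pr y = (x - y) + (y - pr y)" by simp
  thus "x - pr y \<in> K" using assms pr_C(2)[of y] subspace_add[OF K_sub] by metis
qed

lemma pr_add: assumes "x \<in> C" "y \<in> C" shows "pr (x + y) = pr x + pr y"
proof (rule pr_unique)
  show "pr x + pr y \<in> Bp" using pr_C assms subspace_add[OF Bp_sub] by blast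
  have "x + y - (pr x + pr y) = (x - pr x) + (y - pr y)" by simp
  thus "x + y - (pr x + pr y) \<in> K" using assms pr_C(2) subspace_add[OF K_sub] by metis
qed

lemma pr_sm: assumes "x \<in> C" shows "pr (sm c x) = sm c (pr x)"
proof (rule pr_unique)
  show "sm c (pr x) \<in> Bp" using pr_C assms subspace_scale[OF Bp_sub] by blast
  have "sm c x - sm c (pr x) = sm c (x - pr x)" by (simp add: sm_diff)
  thus "sm c x - sm c (pr x) \<in> K" using assms pr_C(2) subspace_scale[OF K_sub] by metis
qed

lemma pr_0: "pr 0 = 0"
  using pr_Bp subspace_0[OF Bp_sub] by blast

lemma L_pr: assumes x: "x \<in> C" and y: "y \<in> C" shows "L (st y * x) = L (st (pr y) * pr x)"
proof -
  let ?kx = "x - pr x" and ?ky = "y - pr y"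
  have kx: "?kx \<in> K" and ky: "?ky \<in> K" using pr_C x y by auto
  have px: "pr x \<in> C" and py: "pr y \<in> C" using pr_C x y Bp_C by auto
  have e: "st y * x = st (pr y) * pr x + st (pr y) * ?kx + st ?ky * x"
    by (simp add: st_diff algebra_simps)
  have "L (st y * x) = L (st (pr y) * pr x) + L (st (pr y) * ?kx) + L (st ?ky * x)"
    unfolding e using x px py kx ky K_C
    by (simp add: L_add prod_sqC st_C subspace_add[OF sqC_sub] subset_iff)
  moreover have "L (st (pr y) * ?kx) = 0" using K_left[OF kx py] .
  moreover have "L (st ?ky * x) = 0" using K_right[OF ky x] .
  ultimately show ?thesis by simp
qed

lemma nondeg: assumes v: "v \<in> Bp" and h: "\<forall>w\<in>Bp. L (st w * v) = 0" shows "v = 0"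
proof -
  have "v \<in> K" unfolding K_iff
  proof safe
    show vC: "v \<in> C" using v Bp_C by auto
    fix c assume c: "c \<in> C"
    have "L (st c * v) = L (st (pr c) * pr v)" using L_pr[OF vC c] .
    also have "\<dots> = 0" using h pr_C[OF c] pr_Bp[OF v] by simp
    finally show "L (st c * v) = 0" .
  qed
  thus ?thesis using v BpK by auto
qed

lemma genBp_C: "i \<in> I \<Longrightarrow> v \<in> Bp \<Longrightarrow> gen i * v \<in> C"
  using genB_C Bp_B by auto

lemma star1:
  assumes i: "i \<in> I" and j: "st (gen i) = gen j" "j \<in> I" and x: "x \<in> Bp" and w: "w \<in> Bp"
  shows "L (st w * pr (gen i * x)) = L (st (pr (gen j * w)) * x)"
proof -
  have "L (st w * pr (gen i * x)) = L (st (pr w) * pr (gen i * x))" using pr_Bp[OF w] by simp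
  also have "\<dots> = L (st w * (gen i * x))" using L_pr genBp_C[OF i x] w Bp_C by auto
  also have "st w * (gen i * x) = st (gen j * w) * x"
    by (metis j(1) mult.assoc st_mult st_st)
  also have "L \<dots> = L (st (pr (gen j * w)) * pr x)" using L_pr genBp_C[OF j(2) w] x Bp_C by auto
  also have "\<dots> = L (st (pr (gen j * w)) * x)" using pr_Bp[OF x] by simp
  finally show ?thesis .
qed

definition T where
  "T w v = foldr (\<lambda>i x. pr (gen i * x)) w v"

lemma T_Nil[simp]: "T [] v = v" unfolding T_def by simp
lemma T_Cons[simp]: "T (i # w) v = pr (gen i * T w v)" unfolding T_def by simp
lemma T_app: "T (u @ w) v = T u (T w v)" unfolding T_def by simp

lemma T_Bp: "set w \<subseteq> I \<Longrightarrow> v \<in> Bp \<Longrightarrow> T w v \<in> Bp"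
  by (induction w) (auto intro: pr_C genBp_C)

lemma T_add: "set w \<subseteq> I \<Longrightarrow> v \<in> Bp \<Longrightarrow> v' \<in> Bp \<Longrightarrow> T w (v + v') = T w v + T w v'"
proof (induction w)
  case (Cons i w)
  thus ?case by (simp add: distrib_left pr_add genBp_C T_Bp)
qed simp

lemma T_sm: "set w \<subseteq> I \<Longrightarrow> v \<in> Bp \<Longrightarrow> T w (sm c v) = sm c (T w v)"
proof (induction w)
  case (Cons i w)
  thus ?case by (simp add: sm_mr[symmetric] pr_sm genBp_C T_Bp)
qed simp

lemma T_short:
  assumes "set w \<subseteq> I" "length w \<le> m" "v \<in> Bp"
  shows "word_prod gen w * v \<in> P (length w) \<and> T w v = pr (word_prod gen w * v)"
  using assms
proof (induction w)
  case Nil thus ?case using Bp_B pr_Bp by (auto simp: wp_Nil)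
next
  case (Cons i w)
  let ?x = "word_prod gen w * v"
  have i: "i \<in> I" and IH: "?x \<in> P (length w)" "T w v = pr ?x" using Cons by auto
  have xC: "?x \<in> C" using IH(1) P_C[of "length w"] Cons(3) by auto
  have a: "gen i * ?x \<in> P (length (i # w))" using prol_gen[OF P_sub i IH(1)] by simp
  have aC: "gen i * ?x \<in> C" using a P_C Cons(3) by blast
  have bC: "gen i * pr ?x \<in> C" using genBp_C[OF i] pr_C[OF xC] by blast
  have "gen i * ?x - gen i * pr ?x = gen i * (?x - pr ?x)" by (simp add: algebra_simps)
  also have "\<dots> \<in> K" using M_K genK_M[OF i pr_C(2)[OF xC]] aC bC subspace_diff[OF C_sub]
    by (metis calculation)
  finally have "pr (gen i * ?x) = pr (gen i * pr ?x)" using pr_eq aC bC by blast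
  thus ?case using a IH by (simp add: wp_Cons mult.assoc)
qed

definition js where "js i = (SOME j. j \<in> I \<and> st (gen i) = gen j)"

lemma js: "i \<in> I \<Longrightarrow> js i \<in> I \<and> st (gen i) = gen (js i)"
proof -
  assume "i \<in> I"
  then obtain j where "j \<in> I \<and> st (gen i) = gen j" using st_gen by blast
  thus ?thesis unfolding js_def by (rule someI)
qed

definition wstar where "wstar w = rev (map js w)"

lemma wstar_I: "set w \<subseteq> I \<Longrightarrow> set (wstar w) \<subseteq> I"
  unfolding wstar_def using js by auto

lemma wstar_len: "length (wstar w) = length w"
  unfolding wstar_def by simp

lemma wstar_Cons: "wstar (i # w) = wstar w @ [js i]"
  unfolding wstar_def by simp

lemma st_wp: "set w \<subseteq> I \<Longrightarrow> st (word_prod gen w) = word_prod gen (wstar w)"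
proof (induction w)
  case Nil thus ?case by (simp add: wp_Nil wstar_def)
next
  case (Cons i w)
  thus ?case by (simp add: wp_Cons wstar_Cons wp_app st_mult js wp_Nil)
qed

lemma T_star:
  assumes "set u \<subseteq> I" "x \<in> Bp" "w \<in> Bp"
  shows "L (st w * T u x) = L (st (T (wstar u) w) * x)"
  using assms
proof (induction u arbitrary: w)
  case Nil thus ?case by (simp add: wstar_def)
next
  case (Cons i u)
  have i: "i \<in> I" and u: "set u \<subseteq> I" using Cons by auto
  have "L (st w * T (i # u) x) = L (st w * pr (gen i * T u x))" by simp
  also have "\<dots> = L (st (pr (gen (js i) * w)) * T u x)"
    using star1[OF i js[OF i, THEN conjunct2] js[OF i, THEN conjunct1] T_Bp[OF u Cons(3)] Cons(4)] .
  also have "\<dots> = L (st (T (wstar u) (pr (gen (js i) * w))) * x)"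
    using Cons(1)[OF u Cons(3)] pr_C genBp_C js i Cons(4) by blast
  also have "T (wstar u) (pr (gen (js i) * w)) = T (wstar (i # u)) w"
    by (simp add: wstar_Cons T_app)
  finally show ?case .
qed


definition Tp where "Tp p v = Ew (\<lambda>w. T w v) p"

lemma Tw_Bp: "p \<in> fpoly I \<Longrightarrow> p w \<noteq> 0 \<Longrightarrow> v \<in> Bp \<Longrightarrow> T w v \<in> Bp"
  using T_Bp fpoly_I by blast

lemma Tp_Bp: "p \<in> fpoly I \<Longrightarrow> v \<in> Bp \<Longrightarrow> Tp p v \<in> Bp"
  unfolding Tp_def by (rule Ew_in[OF Bp_sub]) (simp add: Tw_Bp)

lemma Tp_addp: "p \<in> fpoly I \<Longrightarrow> q \<in> fpoly I \<Longrightarrow> Tp (\<lambda>w. p w + q w) v = Tp p v + Tp q v"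
  unfolding Tp_def by (simp add: Ew_add fpoly_fin)

lemma Tp_smultp: "p \<in> fpoly I \<Longrightarrow> Tp (\<lambda>w. c * p w) v = sm c (Tp p v)"
  unfolding Tp_def by (simp add: Ew_smult fpoly_fin)

lemma Tp_delta: "Tp (\<lambda>u. if u = w then 1 else 0) v = T w v"
  unfolding Tp_def by (rule Ew_delta)

lemma Tp_flmul:
  assumes i: "i \<in> I" and p: "p \<in> fpoly I" and v: "v \<in> Bp"
  shows "Tp (flmul i p) v = pr (gen i * Tp p v)"
proof -
  have "pr (gen i * Tp p v) = Ew (\<lambda>w. pr (gen i * T w v)) p"
    unfolding Tp_def
  proof (rule Ew_hom[OF Bp_sub])
    show "pr (gen i * (x + y)) = pr (gen i * x) + pr (gen i * y)" if "x \<in> Bp" "y \<in> Bp" for x y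
      using that by (simp add: distrib_left pr_add genBp_C[OF i])
    show "pr (gen i * sm c x) = sm c (pr (gen i * x))" if "x \<in> Bp" for c x
      using that by (simp add: sm_mr[symmetric] pr_sm genBp_C[OF i])
  qed (use Tw_Bp[OF p _ v] fpoly_fin[OF p] in auto)
  thus ?thesis unfolding Tp_def Ew_flmul by simp
qed

lemma Tp_frmul: "Tp (frmul i p) v = Tp p (pr (gen i * v))"
  unfolding Tp_def Ew_frmul by (simp add: T_app)

lemma Tp_addv: assumes p: "p \<in> fpoly I" and v: "v \<in> Bp" "v' \<in> Bp"
  shows "Tp p (v + v') = Tp p v + Tp p v'"
  unfolding Tp_def Ew_def
  by (simp add: sum.distrib[symmetric] scale_right_distrib[symmetric]) (rule sum.cong, auto simp: T_add fpoly_I[OF p] v)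

lemma Tp_smv: assumes p: "p \<in> fpoly I" and v: "v \<in> Bp"
  shows "Tp p (sm c v) = sm c (Tp p v)"
  unfolding Tp_def Ew_def
  by (simp add: scale_sum_right) (rule sum.cong, auto simp: T_sm fpoly_I[OF p] v mult.commute)

lemma key_word:
  assumes u: "set u \<subseteq> I" and len: "length u \<le> 2 * m" and v: "v \<in> Bp" and w: "w \<in> Bp"
  shows "st w * (word_prod gen u * v) \<in> sq sm C \<and> L (st w * T u v) = L (st w * (word_prod gen u * v))"
proof -
  define k where "k = length u - m"
  define u1 where "u1 = take k u"
  define u2 where "u2 = drop k u"
  have uu: "u = u1 @ u2" unfolding u1_def u2_def by simp
  have l1: "length u1 \<le> m" and l2: "length u2 \<le> m" using len unfolding u1_def u2_def k_def by auto
  have I1: "set u1 \<subseteq> I" and I2: "set u2 \<subseteq> I" using u uu by auto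
  let ?a = "word_prod gen u2 * v"
  let ?z = "word_prod gen (wstar u1) * w"
  have a: "?a \<in> P (length u2)" "T u2 v = pr ?a" using T_short[OF I2 l2 v] by auto
  have aC: "?a \<in> C" using a(1) P_C l2 by auto
  have z: "?z \<in> P (length (wstar u1))" "T (wstar u1) w = pr ?z"
    using T_short[OF wstar_I[OF I1] _ w] l1 wstar_len by auto
  have zC: "?z \<in> C" using z(1) P_C l1 wstar_len by (metis subsetD)
  have yB: "T u2 v \<in> Bp" using T_Bp[OF I2 v] .
  have "L (st w * T u v) = L (st w * T u1 (T u2 v))" unfolding uu T_app ..
  also have "\<dots> = L (st (T (wstar u1) w) * T u2 v)" using T_star[OF I1 yB w] .
  also have "\<dots> = L (st (pr ?z) * pr ?a)" using a z by simp
  also have "\<dots> = L (st ?z * ?a)" using L_pr[OF aC zC] by simp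
  also have "st ?z * ?a = st w * (word_prod gen u * v)"
  proof -
    have "st (word_prod gen (wstar u1)) = word_prod gen u1"
      using st_wp[OF I1] st_st by metis
    thus ?thesis unfolding uu wp_app by (simp add: st_mult mult.assoc)
  qed
  finally have "L (st w * T u v) = L (st w * (word_prod gen u * v))" .
  moreover have "st ?z * ?a \<in> sq sm C" using prod_sqC st_C zC aC by blast
  moreover have "st ?z * ?a = st w * (word_prod gen u * v)"
  proof -
    have "st (word_prod gen (wstar u1)) = word_prod gen u1"
      using st_wp[OF I1] st_st by metis
    thus ?thesis unfolding uu wp_app by (simp add: st_mult mult.assoc)
  qed
  ultimately show ?thesis by simp
qed

lemma ker_base:
  assumes s: "s \<in> fpoly I" and s0: "fsigma sm gen s = 0"
    and len: "\<And>u. s u \<noteq> 0 \<Longrightarrow> length u \<le> 2 * m" and v: "v \<in> Bp"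
  shows "Tp s v = 0"
proof (rule nondeg)
  show "Tp s v \<in> Bp" using Tp_Bp[OF s v] .
  show "\<forall>w\<in>Bp. L (st w * Tp s v) = 0"
  proof
    fix w assume w: "w \<in> Bp"
    have wC: "st w \<in> C" using w Bp_C st_C by auto
    have "L (st w * Tp s v) = (\<Sum>u | s u \<noteq> 0. s u * L (st w * T u v))"
      unfolding Tp_def
    proof (rule Ew_hom_c[OF Bp_sub])
      show "L (st w * (x + y)) = L (st w * x) + L (st w * y)" if "x \<in> Bp" "y \<in> Bp" for x y
        using that Bp_C wC by (simp add: distrib_left L_add prod_sqC subset_iff)
      show "L (st w * sm c x) = c * L (st w * x)" if "x \<in> Bp" for c x
        using that Bp_C wC by (simp add: sm_mr[symmetric] L_sm prod_sqC subset_iff)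
    qed (use Tw_Bp[OF s _ v] fpoly_fin[OF s] in auto)
    also have "\<dots> = (\<Sum>u | s u \<noteq> 0. s u * L (st w * (word_prod gen u * v)))"
      by (rule sum.cong) (use key_word fpoly_I[OF s] len v w in auto)
    also have "\<dots> = L (st w * (Ew (word_prod gen) s * v))"
    proof (rule sym, rule Ew_hom_c[where U="{x. st w * (x * v) \<in> sq sm C}"])
      show "subspace {x. st w * (x * v) \<in> sq sm C}"
      proof (rule subspaceI)
        show "0 \<in> {x. st w * (x * v) \<in> sq sm C}" using subspace_0[OF sqC_sub] by simp
        show "x + y \<in> {x. st w * (x * v) \<in> sq sm C}"
          if "x \<in> {x. st w * (x * v) \<in> sq sm C}" "y \<in> {x. st w * (x * v) \<in> sq sm C}" for x y
          using that subspace_add[OF sqC_sub] by (simp add: distrib_left distrib_right)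
        show "sm c x \<in> {x. st w * (x * v) \<in> sq sm C}" if "x \<in> {x. st w * (x * v) \<in> sq sm C}" for c x
          using that subspace_scale[OF sqC_sub] by (simp add: sm_ml[symmetric] sm_mr[symmetric])
      qed
      show "L (st w * ((x + y) * v)) = L (st w * (x * v)) + L (st w * (y * v))"
        if "x \<in> {x. st w * (x * v) \<in> sq sm C}" "y \<in> {x. st w * (x * v) \<in> sq sm C}" for x y
        using that by (simp add: distrib_left distrib_right L_add)
      show "L (st w * (sm c x * v)) = c * L (st w * (x * v))" if "x \<in> {x. st w * (x * v) \<in> sq sm C}" for c x
        using that by (simp add: sm_ml[symmetric] sm_mr[symmetric] L_sm)
    qed (use key_word fpoly_I[OF s] len v w fpoly_fin[OF s] in auto)
    also have "\<dots> = 0" using s0 L_0 by (simp add: fsigma_Ew)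
    finally show "L (st w * Tp s v) = 0" .
  qed
qed

lemma fideal_Z:
  assumes S: "S \<subseteq> fpoly I" and SZ: "\<And>s v. s \<in> S \<Longrightarrow> v \<in> Bp \<Longrightarrow> Tp s v = 0"
    and p: "p \<in> fideal I S"
  shows "p \<in> fpoly I \<and> (\<forall>v\<in>Bp. Tp p v = 0)"
  using p
proof (induction rule: fideal.induct)
  case (gen s) thus ?case using S SZ by auto
next
  case zero thus ?case using fpoly_zero by (simp add: Tp_def Ew_zero)
next
  case (add p q) thus ?case using fpoly_add Tp_addp by simp
next
  case (smult p c) thus ?case using fpoly_smult Tp_smultp by simp
next
  case (lmul i p) thus ?case using fpoly_flmul Tp_flmul pr_0 by simp
next
  case (rmul i p) thus ?case using fpoly_frmul Tp_frmul pr_C genBp_C by simp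
qed


lemma findex_ge: assumes s: "s \<in> fpoly I" and u: "s u \<noteq> 0" shows "length u \<le> findex s"
proof -
  have fin: "finite {length w | w. s w \<noteq> 0}"
    using fpoly_fin[OF s] by (simp add: setcompr_eq_image)
  have "findex s = Max {length w | w. s w \<noteq> 0}" using u unfolding findex_def by auto
  thus ?thesis using Max_ge[OF fin] u by auto
qed

lemma delta_S: "\<exists>S. S \<subseteq> fpoly I \<and> fideal I S = fker sm gen I \<and> (\<forall>s\<in>S. \<forall>u. s u \<noteq> 0 \<longrightarrow> length u \<le> 2 * m)"
proof -
  let ?X = "{S. S \<subseteq> fpoly I \<and> fideal I S = fker sm gen I}"
  have d: "Inf (delta_set ` ?X) \<le> enat (2 * m)" using delta unfolding delta_alg_def by simp
  have ne: "delta_set ` ?X \<noteq> {}"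
  proof
    assume "delta_set ` ?X = {}"
    hence "Inf (delta_set ` ?X) = \<infinity>" by (simp add: Inf_enat_def)
    thus False using d by simp
  qed
  hence "Inf (delta_set ` ?X) \<in> delta_set ` ?X"
    unfolding Inf_enat_def using LeastI_ex[of "\<lambda>x. x \<in> delta_set ` ?X"] by (simp only: if_False) blast
  then obtain S where S: "S \<in> ?X" and dS: "delta_set S \<le> enat (2 * m)" using d by force
  have "\<forall>s\<in>S. findex s \<le> 2 * m" using dS unfolding delta_set_def by (simp add: SUP_le_iff)
  moreover have "S \<subseteq> fpoly I" using S by simp
  ultimately have "\<forall>s\<in>S. \<forall>u. s u \<noteq> 0 \<longrightarrow> length u \<le> 2 * m"
    using findex_ge by (meson order_trans subsetD)
  thus ?thesis using S by blast
qed

lemma fker_Z: assumes p: "p \<in> fpoly I" "fsigma sm gen p = 0" and v: "v \<in> Bp" shows "Tp p v = 0"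
proof -
  obtain S where S: "S \<subseteq> fpoly I" "fideal I S = fker sm gen I" "\<forall>s\<in>S. \<forall>u. s u \<noteq> 0 \<longrightarrow> length u \<le> 2 * m"
    using delta_S by blast
  have SZ: "Tp s v = 0" if "s \<in> S" "v \<in> Bp" for s v
  proof (rule ker_base)
    show "s \<in> fpoly I" using S that by auto
    have "s \<in> fideal I S" using that(1) by (rule fideal.gen)
    thus "fsigma sm gen s = 0" using S(2) unfolding fker_def by auto
  qed (use S that in auto)
  have "p \<in> fideal I S" using S(2) p unfolding fker_def by auto
  thus ?thesis using fideal_Z[OF S(1) SZ] v by blast
qed

end



context fe2
begin

definition rep where "rep a = (SOME p. p \<in> fpoly I \<and> fsigma sm gen p = a)"
definition rho where "rho a v = Tp (rep a) v"

lemma rep: "rep a \<in> fpoly I \<and> fsigma sm gen (rep a) = a"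
  unfolding rep_def using fsigma_onto[of a] by (metis (mono_tags, lifting) someI_ex)

lemma rho_eq: assumes p: "p \<in> fpoly I" "fsigma sm gen p = a" and v: "v \<in> Bp"
  shows "rho a v = Tp p v"
proof -
  let ?q = "rep a"
  let ?d = "\<lambda>w. ?q w + (-1) * p w"
  have q: "?q \<in> fpoly I" "fsigma sm gen ?q = a" using rep by auto
  have d: "?d \<in> fpoly I" using fpoly_add[OF q(1) fpoly_smult[OF p(1)]] .
  have e1: "fsigma sm gen ?d = fsigma sm gen ?q + fsigma sm gen (\<lambda>w. (-1) * p w)"
    by (rule fsigma_add[OF q(1) fpoly_smult[OF p(1)]])
  have e2: "fsigma sm gen (\<lambda>w. (-1) * p w) = sm (-1) (fsigma sm gen p)"
    by (rule fsigma_smult[OF p(1)])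
  have "fsigma sm gen ?d = a + sm (-1) a" by (simp only: e1 e2 q(2) p(2))
  hence "fsigma sm gen ?d = 0" by (simp only: sm_neg1) simp
  hence "Tp ?d v = 0" using fker_Z d v by blast
  moreover have "Tp ?d v = Tp ?q v + sm (-1) (Tp p v)"
    by (simp only: Tp_addp[OF q(1) fpoly_smult[OF p(1)]] Tp_smultp[OF p(1)])
  ultimately show ?thesis unfolding rho_def by (simp only: sm_neg1) simp
qed

lemma rho_Bp: "v \<in> Bp \<Longrightarrow> rho a v \<in> Bp"
  unfolding rho_def using Tp_Bp rep by blast

lemma rho_add: "v \<in> Bp \<Longrightarrow> rho (a + b) v = rho a v + rho b v"
proof -
  assume v: "v \<in> Bp"
  have "rho (a + b) v = Tp (\<lambda>w. rep a w + rep b w) v"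
    by (rule rho_eq) (use rep fpoly_add fsigma_add v in auto)
  thus ?thesis using Tp_addp rep unfolding rho_def by auto
qed

lemma rho_sm: "v \<in> Bp \<Longrightarrow> rho (sm c a) v = sm c (rho a v)"
proof -
  assume v: "v \<in> Bp"
  have "rho (sm c a) v = Tp (\<lambda>w. c * rep a w) v"
    by (rule rho_eq) (use rep fpoly_smult fsigma_smult v in auto)
  thus ?thesis using Tp_smultp rep unfolding rho_def by auto
qed

lemma rho_0: "v \<in> Bp \<Longrightarrow> rho 0 v = 0"
  using rho_sm[of v 0 0] by simp

lemma rho_1: "v \<in> Bp \<Longrightarrow> rho 1 v = v"
proof -
  assume v: "v \<in> Bp"
  have "rho 1 v = Tp (\<lambda>u. if u = [] then 1 else 0) v"
    by (rule rho_eq) (use fpoly_delta[of "[]"] fsigma_delta[of "[]"] v in \<open>auto simp: wp_Nil\<close>)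
  thus ?thesis by (simp add: Tp_delta)
qed

lemma rho_gen: "i \<in> I \<Longrightarrow> v \<in> Bp \<Longrightarrow> rho (gen i * a) v = pr (gen i * rho a v)"
proof -
  assume i: "i \<in> I" and v: "v \<in> Bp"
  have "rho (gen i * a) v = Tp (flmul i (rep a)) v"
    by (rule rho_eq) (use rep fpoly_flmul fsigma_flmul i v in auto)
  thus ?thesis using Tp_flmul[OF i _ v] rep unfolding rho_def by auto
qed

lemma rho_addv: "v \<in> Bp \<Longrightarrow> v' \<in> Bp \<Longrightarrow> rho a (v + v') = rho a v + rho a v'"
  unfolding rho_def using Tp_addv rep by blast

lemma rho_smv: "v \<in> Bp \<Longrightarrow> rho a (sm c v) = sm c (rho a v)"
  unfolding rho_def using Tp_smv rep by blast

lemma words_span: "a \<in> span {word_prod gen w | w. set w \<subseteq> I}"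
  using gen_gen unfolding generates_def by simp

lemma rho_mult: "v \<in> Bp \<Longrightarrow> rho (a * b) v = rho a (rho b v)"
proof -
  assume v: "v \<in> Bp"
  let ?Q = "\<lambda>a. \<forall>b. \<forall>v\<in>Bp. rho (a * b) v = rho a (rho b v)"
  have "?Q a" using words_span[of a]
  proof (induction rule: span_induct)
    case base show ?case
    proof (rule subspaceI)
      show "0 \<in> Collect ?Q" by (simp add: rho_0 rho_Bp)
      show "x + y \<in> Collect ?Q" if "x \<in> Collect ?Q" "y \<in> Collect ?Q" for x y
        using that by (simp add: distrib_right rho_add rho_Bp)
      show "sm c x \<in> Collect ?Q" if "x \<in> Collect ?Q" for c x
        using that by (simp add: sm_ml[symmetric] rho_sm rho_Bp)
    qed
  next
    case (step x)
    then obtain w where w: "set w \<subseteq> I" "x = word_prod gen w" by blast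
    have "?Q (word_prod gen w)" using w(1)
    proof (induction w)
      case Nil thus ?case by (simp add: wp_Nil rho_1 rho_Bp)
    next
      case (Cons i w)
      thus ?case by (simp add: wp_Cons mult.assoc rho_gen rho_Bp)
    qed
    thus ?case using w by simp
  qed
  thus ?thesis using v by blast
qed

lemma rho_genv: "i \<in> I \<Longrightarrow> v \<in> Bp \<Longrightarrow> rho (gen i) v = pr (gen i * v)"
  using rho_gen[of i v 1] rho_1 by simp

lemma rho_star: assumes v: "v \<in> Bp" and w: "w \<in> Bp"
  shows "L (st w * rho a v) = L (st (rho (st a) w) * v)"
proof -
  let ?Q = "\<lambda>a. \<forall>v\<in>Bp. \<forall>w\<in>Bp. L (st w * rho a v) = L (st (rho (st a) w) * v)"
  have sC: "st x * y \<in> sq sm C" if "x \<in> Bp" "y \<in> Bp" for x y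
    using that Bp_C by (auto intro: prod_sqC st_C)
  have "?Q a" using words_span[of a]
  proof (induction rule: span_induct)
    case base show ?case
    proof (rule subspaceI)
      show "0 \<in> Collect ?Q" by (simp add: rho_0)
      show "x + y \<in> Collect ?Q" if "x \<in> Collect ?Q" "y \<in> Collect ?Q" for x y
        using that by (simp add: st_add rho_add distrib_left distrib_right L_add sC rho_Bp)
      show "sm c x \<in> Collect ?Q" if "x \<in> Collect ?Q" for c x
        using that by (simp add: st_sm rho_sm rho_Bp sm_mr[symmetric] sm_ml[symmetric] L_sm sC)
    qed
  next
    case (step x)
    then obtain u where u: "set u \<subseteq> I" "x = word_prod gen u" by blast
    have "?Q (word_prod gen u)" using u(1)
    proof (induction u)
      case Nil thus ?case by (simp add: wp_Nil rho_1)
    next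
      case (Cons i u)
      have i: "i \<in> I" and uI: "set u \<subseteq> I" using Cons by auto
      show ?case
      proof (intro ballI)
        fix v w assume v: "v \<in> Bp" and w: "w \<in> Bp"
        let ?j = "js i"
        have j: "?j \<in> I" "st (gen i) = gen ?j" using js[OF i] by auto
        have r: "rho (word_prod gen u) v \<in> Bp" using rho_Bp v .
        have pw: "pr (gen ?j * w) \<in> Bp" using pr_C genBp_C j w by blast
        have "L (st w * rho (word_prod gen (i # u)) v) = L (st w * pr (gen i * rho (word_prod gen u) v))"
          by (simp add: wp_Cons rho_gen i v)
        also have "\<dots> = L (st (pr (gen ?j * w)) * rho (word_prod gen u) v)"
          using star1[OF i j(2) j(1) r w] .
        also have "\<dots> = L (st (rho (st (word_prod gen u)) (pr (gen ?j * w))) * v)"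
          using Cons.IH[OF uI] v pw by blast
        also have "rho (st (word_prod gen u)) (pr (gen ?j * w)) = rho (st (word_prod gen (i # u))) w"
          by (simp add: wp_Cons st_mult j rho_mult w rho_genv)
        finally show "L (st w * rho (word_prod gen (i # u)) v) = L (st (rho (st (word_prod gen (i # u))) w) * v)" .
      qed
    qed
    thus ?case using u by simp
  qed
  thus ?thesis using v w by blast
qed

end



context fe2
begin

lemma rho_diff: "v \<in> Bp \<Longrightarrow> rho (a - b) v = rho a v - rho b v"
proof -
  assume v: "v \<in> Bp"
  have "rho (a + sm (-1) b) v = rho a v + sm (-1) (rho b v)" by (simp only: rho_add[OF v] rho_sm[OF v])
  thus ?thesis by (simp only: sm_neg1) simp
qed

lemma cD: assumes c: "c \<in> C" shows "c - rho c 1 \<in> K"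
proof -
  obtain Vs where V0: "Vs 0 = span {1}" and Vsub: "\<And>l. subspace (Vs l)"
    and Vpr: "\<And>l. Vs (Suc l) \<subseteq> prol sm gen I (Vs l)" and VC: "(\<Union>l. Vs l) = C"
    using C_conn' by metis
  have DI: "\<forall>x\<in>Vs l. x - rho x 1 \<in> K" for l
  proof (induction l)
    case 0
    show ?case unfolding V0 span_singleton
      by (auto simp: rho_sm one_Bp rho_1 subspace_0[OF K_sub])
  next
    case (Suc l)
    show ?case
    proof
      fix x assume x: "x \<in> Vs (Suc l)"
      then obtain w0 s where w0: "w0 \<in> Vs l" and s: "s \<in> span {gen i * v |i v. i \<in> I \<and> v \<in> Vs l}"
        and xe: "x = w0 + s"
        using Vpr unfolding prol_def setplus_def by blast
      have "s - rho s 1 \<in> M" using s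
      proof (induction rule: span_induct)
        case base show ?case
        proof (rule subspaceI)
          show "0 \<in> {y. y - rho y 1 \<in> M}" using subspace_0[OF M_sub] by (simp add: rho_0 one_Bp)
          show "x + y \<in> {y. y - rho y 1 \<in> M}" if "x \<in> {y. y - rho y 1 \<in> M}" "y \<in> {y. y - rho y 1 \<in> M}" for x y
          proof -
            have "x + y - rho (x + y) 1 = (x - rho x 1) + (y - rho y 1)" by (simp add: rho_add one_Bp)
            thus ?thesis using that subspace_add[OF M_sub] by (metis mem_Collect_eq)
          qed
          show "sm c x \<in> {y. y - rho y 1 \<in> M}" if "x \<in> {y. y - rho y 1 \<in> M}" for c x
          proof -
            have "sm c x - rho (sm c x) 1 = sm c (x - rho x 1)" by (simp add: rho_sm one_Bp sm_diff)
            thus ?thesis using that subspace_scale[OF M_sub] by simp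
          qed
        qed
      next
        case (step y)
        then obtain i v where i: "i \<in> I" and v: "v \<in> Vs l" and y: "y = gen i * v" by blast
        let ?r = "rho v 1"
        have r: "?r \<in> Bp" using rho_Bp one_Bp by blast
        have "y - rho y 1 = gen i * (v - ?r) + (gen i * ?r - pr (gen i * ?r))"
          unfolding y by (simp add: rho_gen[OF i one_Bp] algebra_simps)
        moreover have "gen i * (v - ?r) \<in> M" using genK_M[OF i] Suc v by blast
        moreover have "gen i * ?r - pr (gen i * ?r) \<in> M" using pr_C(2)[OF genBp_C[OF i r]] K_M by blast
        ultimately show ?case using subspace_add[OF M_sub] by simp
      qed
      moreover have "w0 - rho w0 1 \<in> M" using Suc w0 K_M by blast
      moreover have "x - rho x 1 = (w0 - rho w0 1) + (s - rho s 1)" unfolding xe by (simp add: rho_add one_Bp)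
      ultimately have "x - rho x 1 \<in> M" using subspace_add[OF M_sub] by simp
      moreover have "x - rho x 1 \<in> C"
        using x VC rho_Bp[OF one_Bp] Bp_C subspace_diff[OF C_sub] by blast
      ultimately show "x - rho x 1 \<in> K" using M_K by blast
    qed
  qed
  thus ?thesis using c VC by blast
qed

lemma rho_C1: "c \<in> C \<Longrightarrow> rho c 1 = pr c"
  using pr_unique[of "rho c 1" c] cD rho_Bp one_Bp by metis

lemma rho_Bp1: "b \<in> Bp \<Longrightarrow> rho b 1 = b"
  using rho_C1 pr_Bp Bp_C by auto

definition LL where "LL a = L (rho a 1)"

lemma r1: "rho a 1 \<in> Bp" using rho_Bp one_Bp by blast
lemma r1C: "rho a 1 \<in> C" using r1 Bp_C by blast
lemma r1S: "rho a 1 \<in> sq sm C" using r1C C_sqC by blast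

lemma LL_form: "LL (st b * a) = L (st (rho b 1) * rho a 1)"
proof -
  have "LL (st b * a) = L (st 1 * rho (st b) (rho a 1))" unfolding LL_def by (simp add: rho_mult one_Bp)
  also have "\<dots> = L (st (rho (st (st b)) 1) * rho a 1)" using rho_star[OF r1 one_Bp] .
  finally show ?thesis by (simp add: st_st)
qed

lemma LL_herm: "herm_on sm st UNIV LL"
  unfolding herm_on_def lin_on_def
proof safe
  show "LL (a + b) = LL a + LL b" for a b unfolding LL_def by (simp add: rho_add one_Bp L_add r1S)
  show "LL (sm c a) = c * LL a" for c a unfolding LL_def by (simp add: rho_sm one_Bp L_sm r1S)
  show "LL (st b) = cnj (LL b)" for b
  proof -
    have "LL (st b) = L (st 1 * rho (st b) 1)" unfolding LL_def by simp
    also have "\<dots> = L (st (rho (st (st b)) 1) * 1)" using rho_star[OF one_Bp one_Bp] .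
    also have "\<dots> = cnj (LL b)" unfolding LL_def by (simp add: st_st L_st r1S)
    finally show ?thesis .
  qed
qed

lemma LL_ext: "x \<in> sq sm C \<Longrightarrow> LL x = L x"
proof -
  assume "x \<in> sq sm C"
  hence xs: "x \<in> span {a * b | a b. a \<in> C \<and> b \<in> C}" by (simp add: sq_def)
  have lin: "LL (a + b) = LL a + LL b" "LL (sm c a) = c * LL a" for a b c
    using LL_herm unfolding herm_on_def lin_on_def by auto
  have "x \<in> sq sm C \<and> LL x = L x" using xs
  proof (induction rule: span_induct)
    case base show ?case
    proof (rule subspaceI)
      show "0 \<in> {x. x \<in> sq sm C \<and> LL x = L x}" using subspace_0[OF sqC_sub] lin(2)[of 0 0] L_0 by simp
    qed (auto simp: lin L_add L_sm subspace_add[OF sqC_sub] subspace_scale[OF sqC_sub])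
  next
    case (step y)
    then obtain a b where a: "a \<in> C" and b: "b \<in> C" and y: "y = a * b" by blast
    have "LL (st (st a) * b) = L (st (rho (st a) 1) * rho b 1)" by (rule LL_form)
    also have "\<dots> = L (st (pr (st a)) * pr b)" using rho_C1 a b st_C by simp
    also have "\<dots> = L (st (st a) * b)" using L_pr[OF b st_C[OF a]] by simp
    finally show ?case using y st_st prod_sqC[OF a b] by simp
  qed
  thus ?thesis by simp
qed

lemma KLL_iff: "a \<in> kerL st LL UNIV \<longleftrightarrow> rho a 1 = 0"
proof
  assume a: "a \<in> kerL st LL UNIV"
  show "rho a 1 = 0"
  proof (rule nondeg[OF r1], rule ballI)
    fix w assume w: "w \<in> Bp"
    have "LL (st w * a) = 0" using a unfolding kerU_iff by blast
    thus "L (st w * rho a 1) = 0" using LL_form rho_Bp1[OF w] by simp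
  qed
next
  assume "rho a 1 = 0"
  thus "a \<in> kerL st LL UNIV" unfolding kerU_iff using LL_form L_0 by simp
qed

lemma KLL_sub: "subspace (kerL st LL UNIV)"
  using kerU_sub[OF LL_herm] .

lemma diff_KLL: "a - rho a 1 \<in> kerL st LL UNIV"
  unfolding KLL_iff by (simp add: rho_diff one_Bp rho_Bp1[OF r1])

lemma LL_flat: "flat_ext st LL C UNIV"
  unfolding flat_ext_def
proof (rule sym, rule set_eqI, rule iffI)
  fix x :: 'a
  have "x = rho x 1 + (x - rho x 1)" by simp
  thus "x \<in> setplus C (kerL st LL UNIV)" unfolding setplus_def using r1C diff_KLL by blast
qed simp

lemma BpKLL: "Bp \<inter> kerL st LL UNIV = {0}"
proof safe
  fix b assume "b \<in> Bp" "b \<in> kerL st LL UNIV"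
  thus "b = 0" using KLL_iff rho_Bp1 by auto
qed (auto simp: subspace_0[OF Bp_sub] subspace_0[OF KLL_sub])

lemma LL_ds: "direct_sum Bp (kerL st LL UNIV) UNIV"
  unfolding direct_sum_def
proof
  show "setplus Bp (kerL st LL UNIV) = UNIV"
  proof (rule set_eqI, rule iffI)
    fix x :: 'a
    have "x = rho x 1 + (x - rho x 1)" by simp
    thus "x \<in> setplus Bp (kerL st LL UNIV)" unfolding setplus_def using r1 diff_KLL by blast
  qed simp
qed (rule BpKLL)

lemma projLL: "proj Bp (kerL st LL UNIV) a = rho a 1"
  by (rule proj_unique[OF Bp_sub KLL_sub BpKLL r1 diff_KLL])

lemma projK: "c \<in> C \<Longrightarrow> proj Bp K c = rho c 1"
  using rho_C1 pr_def by simp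

lemma formLL: "v \<in> Bp \<Longrightarrow> w \<in> Bp \<Longrightarrow> form LL st v w = L (st w * v)"
  unfolding form_def using LL_form rho_Bp1 by simp

lemma LL_rep: "star_rep sm st Bp (form LL st) (\<lambda>a b. proj Bp (kerL st LL UNIV) (a * b))"
proof -
  have e: "proj Bp (kerL st LL UNIV) (a * v) = rho a v" if "v \<in> Bp" for a v
    unfolding projLL using that by (simp add: rho_mult one_Bp rho_Bp1)
  have e1: "proj Bp (kerL st LL UNIV) v = v" if "v \<in> Bp" for v
    using e[of v 1] that rho_1 by simp
  show ?thesis unfolding star_rep_def
    by (simp add: e e1 rho_Bp rho_addv rho_smv rho_add rho_sm rho_mult rho_1 formLL rho_star
        subspace_add[OF Bp_sub] subspace_scale[OF Bp_sub])
qed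

lemma LL_vec: "LL a = form LL st (proj Bp (kerL st LL UNIV) (a * 1)) 1"
  unfolding projLL form_def by (simp add: LL_def rho_Bp1[OF r1])

lemma LL_nondeg: "b \<in> Bp \<Longrightarrow> \<forall>b'\<in>Bp. form LL st b b' = 0 \<Longrightarrow> b = 0"
  using nondeg formLL by simp

lemma LL_unique:
  assumes h: "herm_on sm st UNIV Lx" and ext: "\<forall>x\<in>sq sm C. Lx x = L x"
    and fl: "flat_ext st Lx C UNIV"
  shows "Lx = LL"
proof
  fix a
  have KK: "K \<subseteq> kerL st Lx UNIV" using K_kerU[OF h ext fl] .
  have ks: "subspace (kerL st Lx UNIV)" using kerU_sub[OF h] .
  let ?Q = "\<lambda>a. a - rho a 1 \<in> kerL st Lx UNIV"
  have "?Q a" using words_span[of a]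
  proof (induction rule: span_induct)
    case base show ?case
    proof (rule subspaceI)
      show "0 \<in> Collect ?Q" using subspace_0[OF ks] by (simp add: rho_0 one_Bp)
      show "x + y \<in> Collect ?Q" if "x \<in> Collect ?Q" "y \<in> Collect ?Q" for x y
      proof -
        have "x + y - rho (x + y) 1 = (x - rho x 1) + (y - rho y 1)" by (simp add: rho_add one_Bp)
        thus ?thesis using that subspace_add[OF ks] by (metis mem_Collect_eq)
      qed
      show "sm c x \<in> Collect ?Q" if "x \<in> Collect ?Q" for c x
      proof -
        have "sm c x - rho (sm c x) 1 = sm c (x - rho x 1)" by (simp add: rho_sm one_Bp sm_diff)
        thus ?thesis using that subspace_scale[OF ks] by simp
      qed
    qed
  next
    case (step x)
    then obtain u where u: "set u \<subseteq> I" "x = word_prod gen u" by blast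
    have "?Q (word_prod gen u)" using u(1)
    proof (induction u)
      case Nil thus ?case using subspace_0[OF ks] by (simp add: wp_Nil rho_1 one_Bp)
    next
      case (Cons i u)
      let ?y = "word_prod gen u"
      let ?r = "rho ?y 1"
      have i: "i \<in> I" using Cons by auto
      have "word_prod gen (i # u) - rho (word_prod gen (i # u)) 1 = gen i * (?y - ?r) + (gen i * ?r - pr (gen i * ?r))"
        by (simp add: wp_Cons rho_gen[OF i one_Bp] algebra_simps)
      moreover have "gen i * (?y - ?r) \<in> kerL st Lx UNIV" using kerU_left Cons by auto
      moreover have "gen i * ?r - pr (gen i * ?r) \<in> kerL st Lx UNIV"
        using pr_C(2)[OF genBp_C[OF i r1]] KK by blast
      ultimately show ?case using subspace_add[OF ks] by simp
    qed
    thus ?case using u by simp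
  qed
  hence "Lx (st 1 * (a - rho a 1)) = 0" unfolding kerU_iff by blast
  moreover have "Lx (a - rho a 1) = Lx a - Lx (rho a 1)"
  proof -
    have "Lx a = Lx ((a - rho a 1) + rho a 1)" by simp
    also have "\<dots> = Lx (a - rho a 1) + Lx (rho a 1)" using h unfolding herm_on_def lin_on_def by blast
    finally show ?thesis by simp
  qed
  ultimately have "Lx a = Lx (rho a 1)" by simp
  also have "\<dots> = L (rho a 1)" using ext r1S by blast
  finally show "Lx a = LL a" unfolding LL_def .
qed


lemma cs_aux:
  fixes z G :: complex
  assumes G: "Im G = 0" "Re G \<ge> 0"
    and h: "\<And>t::real. t > 0 \<Longrightarrow> 0 \<le> Re (z * cnj z) * (t^2 * Re G - 2 * t)"
  shows "z = 0"
proof -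
  let ?n = "Re (z * cnj z)"
  have n: "?n = (cmod z)^2" using complex_norm_square[of z] by (metis Re_complex_of_real)
  define t where "t = 1 / (Re G + 1)"
  have t: "t > 0" using G unfolding t_def by simp
  have "t * Re G < 1" unfolding t_def using G by (simp add: field_simps)
  hence neg: "t^2 * Re G - 2 * t < 0" using t by (simp add: power2_eq_square algebra_simps)
  have "0 \<le> ?n * (t^2 * Re G - 2 * t)" using h t by blast
  hence "?n \<le> 0" using neg by (simp add: mult_le_0_iff zero_le_mult_iff)
  hence "cmod z = 0" using n by simp
  thus ?thesis by simp
qed

lemma cs:
  assumes pos: "positive_on st C L" and b: "b \<in> Bp" and w: "w \<in> Bp" and bb: "L (st b * b) = 0"
  shows "L (st w * b) = 0"
proof -
  have bC: "b \<in> C" and wC: "w \<in> C" using b w Bp_C by auto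
  have S: "st x * y \<in> sq sm C" if "x \<in> C" "y \<in> C" for x y using that prod_sqC st_C by blast
  let ?z = "L (st w * b)" and ?G = "L (st w * w)"
  have Gp: "0 \<le> ?G" using pos wC unfolding positive_on_def by blast
  hence G: "Im ?G = 0" "Re ?G \<ge> 0" by (auto simp: less_eq_complex_def)
  have zc: "L (st b * w) = cnj ?z"
  proof -
    have "st (st w * b) = st b * w" by (simp add: st_mult st_st)
    thus ?thesis using L_st[OF S[OF wC bC]] by simp
  qed
  have key: "0 \<le> Re (?z * cnj ?z) * (t^2 * Re ?G - 2 * t)" if t: "t > 0" for t :: real
  proof -
    define c where "c = - (complex_of_real t * ?z)"
    let ?x = "b + sm c w"
    have xC: "?x \<in> C" using bC wC subspace_add[OF C_sub] subspace_scale[OF C_sub] by blast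
    have "0 \<le> L (st ?x * ?x)" using pos xC unfolding positive_on_def by blast
    moreover have "st ?x * ?x = st b * b + sm c (st b * w) + sm (cnj c) (st w * b) + sm (cnj c * c) (st w * w)"
      by (simp add: st_add st_sm distrib_left distrib_right sm_ml[symmetric] sm_mr[symmetric] add.assoc mult.commute scale_right_distrib)
    moreover have "L (st b * b + sm c (st b * w) + sm (cnj c) (st w * b) + sm (cnj c * c) (st w * w))
        = L (st b * b) + c * L (st b * w) + cnj c * ?z + (cnj c * c) * ?G"
      using S bC wC by (simp add: L_add L_sm subspace_add[OF sqC_sub] subspace_scale[OF sqC_sub])
    ultimately have "0 \<le> c * cnj ?z + cnj c * ?z + (cnj c * c) * ?G" using bb zc by simp
    also have "c * cnj ?z + cnj c * ?z + (cnj c * c) * ?G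
        = (?z * cnj ?z) * complex_of_real (t^2) * ?G - 2 * complex_of_real t * (?z * cnj ?z)"
      unfolding c_def by (simp add: algebra_simps power2_eq_square)
    finally have "0 \<le> Re ((?z * cnj ?z) * complex_of_real (t^2) * ?G - 2 * complex_of_real t * (?z * cnj ?z))"
      by (simp add: less_eq_complex_def)
    moreover have "Im (?z * cnj ?z) = 0" by simp
    ultimately show ?thesis using G(1) by (simp add: algebra_simps)
  qed
  show ?thesis using cs_aux[OF G key] by blast
qed

lemma LL_pos: "positive_on st C L \<Longrightarrow> positive_on st UNIV LL"
  unfolding positive_on_def using LL_form r1C by simp

lemma LL_posdef: assumes pos: "positive_on st C L" and b: "b \<in> Bp" and nz: "b \<noteq> 0"
  shows "0 < form LL st b b"
proof -
  have f: "form LL st b b = L (st b * b)" using formLL b by simp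
  have ge: "0 \<le> L (st b * b)" using pos b Bp_C unfolding positive_on_def by blast
  have "L (st b * b) \<noteq> 0"
  proof
    assume "L (st b * b) = 0"
    hence "\<forall>w\<in>Bp. L (st w * b) = 0" using cs[OF pos b] by blast
    thus False using nondeg b nz by blast
  qed
  thus ?thesis using f ge by simp
qed

end



lemma fe_I:
  assumes alg: "star_algebra sm st"
    and gen_star: "\<forall>i\<in>I. \<exists>j\<in>I. st (gen i) = gen j"
    and gen_gen: "generates sm gen I"
    and B_sub: "module.subspace sm B" and B_star: "star_inv st B"
    and C_sub: "module.subspace sm C" and C_star: "star_inv st C"
    and BC: "B \<subseteq> C"
    and B_conn: "connected_to_1 sm gen I B"
    and C_conn: "connected_to_1 sm gen I C"
    and m1: "1 \<le> m"
    and Bm: "(prol sm gen I ^^ m) B \<subseteq> C"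
    and delta: "delta_alg sm gen I \<le> enat (2 * m)"
    and L_herm: "herm_on sm st (sq sm C) L"
    and L_flat: "flat_ext st L B C"
  shows "fe sm st gen I B C L m"
proof -
  have vs: "vector_space sm" using alg unfolding star_algebra_def by blast
  show ?thesis
  proof (rule fe.intro[OF vs], rule fe_axioms.intro)
  qed (use alg assms in \<open>auto simp: star_algebra_def connected_to_1_def\<close>)
qed

context fe
begin

lemma zero_case:
  assumes z: "\<forall>x\<in>sq sm C. L x = 0"
  shows "herm_on sm st UNIV (\<lambda>_. 0) \<and> flat_ext st (\<lambda>_. 0) C UNIV"
proof
  show "herm_on sm st UNIV (\<lambda>_. 0)" unfolding herm_on_def lin_on_def by simp
  show "flat_ext st (\<lambda>_. 0) C UNIV" unfolding flat_ext_def
  proof (rule sym, rule set_eqI, rule iffI)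
    fix x :: 'a
    have "x = 0 + x" by simp
    moreover have "x \<in> kerL st (\<lambda>_. 0) UNIV" unfolding kerU_iff by simp
    ultimately show "x \<in> setplus C (kerL st (\<lambda>_. 0) UNIV)"
      unfolding setplus_def using subspace_0[OF C_sub] by blast
  qed simp
qed

lemma zero_unique:
  assumes z: "\<forall>x\<in>sq sm C. L x = 0"
    and h: "herm_on sm st UNIV Lx" and ext: "\<forall>x\<in>sq sm C. Lx x = L x"
    and fl: "flat_ext st Lx C UNIV"
  shows "Lx = (\<lambda>_. 0)"
proof
  fix a
  have "a \<in> setplus C (kerL st Lx UNIV)" using fl unfolding flat_ext_def by auto
  then obtain c k where c: "c \<in> C" and k: "k \<in> kerL st Lx UNIV" and e: "a = c + k"
    unfolding setplus_def by blast
  have "Lx a = Lx c + Lx (st 1 * k)" unfolding e using h unfolding herm_on_def lin_on_def by simp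
  also have "Lx (st 1 * k) = 0" using k unfolding kerU_iff by blast
  also have "Lx c = 0" using ext z C_sqC[OF c] by simp
  finally show "Lx a = 0" by simp
qed

end

theorem theorem3p1:
  fixes sm :: "complex \<Rightarrow> 'a::ring_1 \<Rightarrow> 'a"
    and st :: "'a \<Rightarrow> 'a"
    and gen :: "'i \<Rightarrow> 'a"
    and I :: "'i set"
    and B C :: "'a set"
    and L :: "'a \<Rightarrow> complex"
    and m :: nat
  assumes alg: "star_algebra sm st"
    and gen_star: "\<forall>i\<in>I. \<exists>j\<in>I. st (gen i) = gen j"
    and gen_gen: "generates sm gen I"
    and B_sub: "module.subspace sm B" and B_star: "star_inv st B"
    and C_sub: "module.subspace sm C" and C_star: "star_inv st C"
    and BC: "B \<subseteq> C"
    and B_conn: "connected_to_1 sm gen I B"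
    and C_conn: "connected_to_1 sm gen I C"
    and m1: "1 \<le> m"
    and Bm: "(prol sm gen I ^^ m) B \<subseteq> C"
    and delta: "delta_alg sm gen I \<le> enat (2 * m)"
    and L_herm: "herm_on sm st (sq sm C) L"
    and L_flat: "flat_ext st L B C"
  shows "\<exists>\<LL>.
     herm_on sm st UNIV \<LL> \<and> (\<forall>x\<in>sq sm C. \<LL> x = L x) \<and> flat_ext st \<LL> C UNIV \<and>
     (\<forall>\<LL>'. herm_on sm st UNIV \<LL>' \<and> (\<forall>x\<in>sq sm C. \<LL>' x = L x) \<and> flat_ext st \<LL>' C UNIV
            \<longrightarrow> \<LL>' = \<LL>) \<and>
     (\<forall>\<LL>'. herm_on sm st UNIV \<LL>' \<and> (\<forall>x\<in>sq sm C. \<LL>' x = L x)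
            \<longrightarrow> (flat_ext st \<LL>' C UNIV \<longleftrightarrow> flat_ext st \<LL>' B UNIV)) \<and>
     ((\<exists>x\<in>sq sm C. L x \<noteq> 0) \<longrightarrow>
        (\<exists>B'. module.subspace sm B' \<and> B' \<subseteq> B \<and> 1 \<in> B' \<and> direct_sum B' (kerL st L C) C)) \<and>
     (\<forall>B'. module.subspace sm B' \<and> B' \<subseteq> B \<and> 1 \<in> B' \<and> direct_sum B' (kerL st L C) C \<longrightarrow>
        direct_sum B' (kerL st \<LL> UNIV) UNIV \<and>
        (\<forall>b\<in>B'. (\<forall>b'\<in>B'. form \<LL> st b b' = 0) \<longrightarrow> b = 0) \<and>
        (\<forall>c\<in>C. proj B' (kerL st L C) c = proj B' (kerL st \<LL> UNIV) c) \<and>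
        star_rep sm st B' (form \<LL> st) (\<lambda>a b. proj B' (kerL st \<LL> UNIV) (a * b)) \<and>
        (\<forall>a. \<LL> a = form \<LL> st (proj B' (kerL st \<LL> UNIV) (a * 1)) 1) \<and>
        (positive_on st C L \<longrightarrow>
           positive_on st UNIV \<LL> \<and> (\<forall>b\<in>B'. b \<noteq> 0 \<longrightarrow> 0 < form \<LL> st b b)))"
proof -
  interpret F: fe sm st gen I B C L m
    by (rule fe_I) (use assms in auto)
  show ?thesis
  proof (cases "\<exists>B'. module.subspace sm B' \<and> B' \<subseteq> B \<and> 1 \<in> B' \<and> direct_sum B' (kerL st L C) C")
    case True
    then obtain B0 where B0: "module.subspace sm B0" "B0 \<subseteq> B" "1 \<in> B0" "direct_sum B0 (kerL st L C) C"
      by blast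
    interpret G: fe2 sm st gen I B C L m B0
      by (rule fe2.intro, rule F.fe_axioms, rule fe2_axioms.intro) (use B0 F.K_def in auto)
    show ?thesis
    proof (rule exI[of _ G.LL], intro conjI)
      show "herm_on sm st UNIV G.LL" by (rule G.LL_herm)
      show "\<forall>x\<in>sq sm C. G.LL x = L x" using G.LL_ext by blast
      show "flat_ext st G.LL C UNIV" by (rule G.LL_flat)
      show "\<forall>\<LL>'. herm_on sm st UNIV \<LL>' \<and> (\<forall>x\<in>sq sm C. \<LL>' x = L x) \<and> flat_ext st \<LL>' C UNIV
            \<longrightarrow> \<LL>' = G.LL" using G.LL_unique by blast
      show "\<forall>\<LL>'. herm_on sm st UNIV \<LL>' \<and> (\<forall>x\<in>sq sm C. \<LL>' x = L x)
            \<longrightarrow> (flat_ext st \<LL>' C UNIV \<longleftrightarrow> flat_ext st \<LL>' B UNIV)" using F.flat_CB by blast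
      show "(\<exists>x\<in>sq sm C. L x \<noteq> 0) \<longrightarrow>
        (\<exists>B'. module.subspace sm B' \<and> B' \<subseteq> B \<and> 1 \<in> B' \<and> direct_sum B' (kerL st L C) C)"
        using F.exists_Bp F.K_def by simp
      show "\<forall>B'. module.subspace sm B' \<and> B' \<subseteq> B \<and> 1 \<in> B' \<and> direct_sum B' (kerL st L C) C \<longrightarrow>
        direct_sum B' (kerL st G.LL UNIV) UNIV \<and>
        (\<forall>b\<in>B'. (\<forall>b'\<in>B'. form G.LL st b b' = 0) \<longrightarrow> b = 0) \<and>
        (\<forall>c\<in>C. proj B' (kerL st L C) c = proj B' (kerL st G.LL UNIV) c) \<and>
        star_rep sm st B' (form G.LL st) (\<lambda>a b. proj B' (kerL st G.LL UNIV) (a * b)) \<and>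
        (\<forall>a. G.LL a = form G.LL st (proj B' (kerL st G.LL UNIV) (a * 1)) 1) \<and>
        (positive_on st C L \<longrightarrow>
           positive_on st UNIV G.LL \<and> (\<forall>b\<in>B'. b \<noteq> 0 \<longrightarrow> 0 < form G.LL st b b))"
      proof (intro allI impI)
        fix B' assume B': "module.subspace sm B' \<and> B' \<subseteq> B \<and> 1 \<in> B' \<and> direct_sum B' (kerL st L C) C"
        interpret H: fe2 sm st gen I B C L m B'
          by (rule fe2.intro, rule F.fe_axioms, rule fe2_axioms.intro) (use B' F.K_def in auto)
        have "H.LL = G.LL" using G.LL_unique[OF H.LL_herm _ H.LL_flat] H.LL_ext by blast
        hence eq: "G.LL = H.LL" by simp
        show "direct_sum B' (kerL st G.LL UNIV) UNIV \<and>
        (\<forall>b\<in>B'. (\<forall>b'\<in>B'. form G.LL st b b' = 0) \<longrightarrow> b = 0) \<and>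
        (\<forall>c\<in>C. proj B' (kerL st L C) c = proj B' (kerL st G.LL UNIV) c) \<and>
        star_rep sm st B' (form G.LL st) (\<lambda>a b. proj B' (kerL st G.LL UNIV) (a * b)) \<and>
        (\<forall>a. G.LL a = form G.LL st (proj B' (kerL st G.LL UNIV) (a * 1)) 1) \<and>
        (positive_on st C L \<longrightarrow>
           positive_on st UNIV G.LL \<and> (\<forall>b\<in>B'. b \<noteq> 0 \<longrightarrow> 0 < form G.LL st b b))"
          unfolding eq
          using H.LL_ds H.LL_nondeg H.projK H.projLL H.LL_rep H.LL_vec H.LL_pos H.LL_posdef F.K_def
          by auto
      qed
    qed
  next
    case False
    hence z: "\<forall>x\<in>sq sm C. L x = 0" using F.exists_Bp F.K_def by auto
    show ?thesis
    proof (rule exI[of _ "\<lambda>_. 0"], intro conjI)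
      show "herm_on sm st UNIV (\<lambda>_. 0)" using F.zero_case[OF z] by blast
      show "\<forall>x\<in>sq sm C. 0 = L x" using z by simp
      show "flat_ext st (\<lambda>_. 0) C UNIV" using F.zero_case[OF z] by blast
      show "\<forall>\<LL>'. herm_on sm st UNIV \<LL>' \<and> (\<forall>x\<in>sq sm C. \<LL>' x = L x) \<and> flat_ext st \<LL>' C UNIV
            \<longrightarrow> \<LL>' = (\<lambda>_. 0)" using F.zero_unique[OF z] by blast
      show "\<forall>\<LL>'. herm_on sm st UNIV \<LL>' \<and> (\<forall>x\<in>sq sm C. \<LL>' x = L x)
            \<longrightarrow> (flat_ext st \<LL>' C UNIV \<longleftrightarrow> flat_ext st \<LL>' B UNIV)" using F.flat_CB by blast
    qed (use False z in auto)
  qed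
qed


end
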